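(* Under the setup below, assume that $P$ is a simplex with vertices $v_0,\dots,v_d$, and let $$\mathrm{BOX}(P)=\Big\{v\in M': v=\sum_{i=0}^d a_iv_i \text{ for some } 0\le a_i<1\Big\}.$$ Let $u:M'\to\mathbb{Z}$ be the projection to the second factor. Then for each $i$, $\phi_i$ is the permutation character of $G$ acting on $\{v\in\mathrm{BOX}(P): u(v)=i\}$. In particular, for each $g\in G$, $$\sum_{m\ge0}\#(mP_g\cap M')\,t^m=\frac{\sum_{v\in\mathrm{BOX}(P)^g}t^{u(v)}}{(1-t)\det(I-\rho(g)t)},$$ where $\mathrm{BOX}(P)^g$ is the set of elements of $\mathrm{BOX}(P)$ fixed by $g$. Moreover, the multiplicity of the trivial character in $\phi_i$ equals the number of $G$-orbits on $\{v\in\mathrm{BOX}(P):u(v)=i\}$. The multiplicity of $\det(\rho)$ in $\phi_i$ equals the number of such orbits whose isotropy subgroup is contained in $\{g:\det\rho(g)=1\}$.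
   Context: Setup. Let $G$ be a finite group acting linearly on a lattice $M'=M\oplus\mathbb{Z}$ of rank $d+1$, such that the projection $M'\to\mathbb{Z}$ onto the second factor is $G$-invariant. Let $P\subseteq M_\mathbb{R}\times\{1\}$ be a $d$-dimensional $G$-invariant lattice polytope (vertices in $M'$). Let $\rho:G\to GL(M)$ be the induced action on $M=M\times\{0\}$, with complexification $M_\mathbb{C}$. For $m\ge1$, $\chi_{mP}$ is the permutation character of $G$ on $mP\cap M'$, and $\chi_{0P}=1$ is the trivial character. $R(G)$ is the ring of virtual characters. Set $\det(I-\rho t)=\sum_{i=0}^d(-1)^i\wedge^iM_\mathbb{C}\,t^i\in R(G)[t]$; its value at $g$ is $\det(I-\rho(g)t)$. Define $\phi[t]=\sum_{i\ge0}\phi_it^i\in R(G)[[t]]$ by $$\sum_{m\ge0}\chi_{mP}t^m=\frac{\phi[t]}{(1-t)\det(I-\rho t)}.$$ For $g\in G$, $P_g=\{x\in P: gx=x\}$. *)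

theory Defs
  imports "HOL-Analysis.Analysis" "HOL-Computational_Algebra.Formal_Power_Series"
    "HOL-Algebra.Group"
begin

text \<open>The lattice M' = M \<oplus> Z is modelled as (int^'d) \<times> int, with M = int^'d and d = CARD('d).
  A linear action of g on M' preserving the projection u = snd has the form
  (x,h) \<mapsto> (A g x + h b g, h); A g is the matrix of rho(g) on M = M \<times> {0}.\<close>

definition latact :: "('g \<Rightarrow> int^'d^'d) \<Rightarrow> ('g \<Rightarrow> int^'d) \<Rightarrow> 'g \<Rightarrow> (int^'d) \<times> int \<Rightarrow> (int^'d) \<times> int" where
  "latact A b g v = (A g *v fst v + snd v *s b g, snd v)"

definition realact :: "('g \<Rightarrow> int^'d^'d) \<Rightarrow> ('g \<Rightarrow> int^'d) \<Rightarrow> 'g \<Rightarrow> (real^'d) \<times> real \<Rightarrow> (real^'d) \<times> real" where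
  "realact A b g y = ((\<chi> i j. real_of_int (A g $ i $ j)) *v fst y
                      + snd y *\<^sub>R (\<chi> i. real_of_int (b g $ i)), snd y)"

definition emb :: "(int^'d) \<times> int \<Rightarrow> (real^'d) \<times> real" where
  "emb v = ((\<chi> i. real_of_int (fst v $ i)), real_of_int (snd v))"

definition latpts :: "nat \<Rightarrow> ((real^'d) \<times> real) set \<Rightarrow> ((int^'d) \<times> int) set" where
  "latpts m S = {v. emb v \<in> (\<lambda>y. real m *\<^sub>R y) ` S}"

definition fixpart :: "('g \<Rightarrow> int^'d^'d) \<Rightarrow> ('g \<Rightarrow> int^'d) \<Rightarrow> 'g \<Rightarrow> ((real^'d) \<times> real) set \<Rightarrow> ((real^'d) \<times> real) set" where
  "fixpart A b g S = {x \<in> S. realact A b g x = x}"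

definition permchar :: "('g \<Rightarrow> int^'d^'d) \<Rightarrow> ('g \<Rightarrow> int^'d) \<Rightarrow> ((real^'d) \<times> real) set \<Rightarrow> nat \<Rightarrow> 'g \<Rightarrow> complex" where
  "permchar A b P m g = of_nat (card {v \<in> latpts m P. latact A b g v = v})"

definition detIrho :: "('g \<Rightarrow> int^'d^'d) \<Rightarrow> 'g \<Rightarrow> complex fps" where
  "detIrho A g = det (\<chi> i j. (if i = j then 1 else 0) - fps_const (of_int (A g $ i $ j)) * fps_X)"

text \<open>phi[t] evaluated at g: the unique power series with
  sum_m chi_{mP}(g) t^m = phi[t](g) / ((1-t) det(I - rho(g) t)).\<close>
definition phi :: "('g \<Rightarrow> int^'d^'d) \<Rightarrow> ('g \<Rightarrow> int^'d) \<Rightarrow> ((real^'d) \<times> real) set \<Rightarrow> 'g \<Rightarrow> complex fps" where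
  "phi A b P g = Abs_fps (\<lambda>m. permchar A b P m g) * (1 - fps_X) * detIrho A g"

definition BOX :: "nat \<Rightarrow> (nat \<Rightarrow> (int^'d) \<times> int) \<Rightarrow> ((int^'d) \<times> int) set" where
  "BOX d vs = {v. \<exists>a::nat \<Rightarrow> real. (\<forall>i\<le>d. 0 \<le> a i \<and> a i < 1)
                   \<and> emb v = (\<Sum>i\<le>d. a i *\<^sub>R emb (vs i))}"

text \<open>Inner product of class functions on a finite group; the multiplicity of an
  irreducible character psi in a virtual character chi is char_inner G chi psi.\<close>
definition char_inner :: "('g, 'c) monoid_scheme \<Rightarrow> ('g \<Rightarrow> complex) \<Rightarrow> ('g \<Rightarrow> complex) \<Rightarrow> complex" where
  "char_inner G f h = (\<Sum>g\<in>carrier G. f g * cnj (h g)) / of_nat (card (carrier G))"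

definition act_orbit :: "('g, 'c) monoid_scheme \<Rightarrow> ('g \<Rightarrow> 'x \<Rightarrow> 'x) \<Rightarrow> 'x \<Rightarrow> 'x set" where
  "act_orbit G f x = (\<lambda>g. f g x) ` carrier G"

definition act_stabilizer :: "('g, 'c) monoid_scheme \<Rightarrow> ('g \<Rightarrow> 'x \<Rightarrow> 'x) \<Rightarrow> 'x \<Rightarrow> 'g set" where
  "act_stabilizer G f x = {g \<in> carrier G. f g x = x}"

definition act_orbits :: "('g, 'c) monoid_scheme \<Rightarrow> ('g \<Rightarrow> 'x \<Rightarrow> 'x) \<Rightarrow> 'x set \<Rightarrow> 'x set set" where
  "act_orbits G f S = act_orbit G f ` S"

end

theory Submission
  imports Defs "HOL-Combinatorics.Cycles"
begin

definition gen :: "'x set \<Rightarrow> ('x \<Rightarrow> nat) \<Rightarrow> complex fps" where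
  "gen W wt = Abs_fps (\<lambda>k. of_nat (card {x\<in>W. wt x = k}))"

lemma gen_nth: "fps_nth (gen W wt) k = of_nat (card {x\<in>W. wt x = k})"
  by (simp add: gen_def)

lemma gen_finite:
  assumes "finite W" shows "gen W wt = (\<Sum>x\<in>W. fps_X ^ wt x)"
proof (rule fps_ext)
  fix k
  have "fps_nth (\<Sum>x\<in>W. fps_X ^ wt x) k = (\<Sum>x\<in>W. if wt x = k then 1 else (0::complex))"
    by (simp add: fps_sum_nth) (metis)
  also have "\<dots> = of_nat (card {x\<in>W. wt x = k})"
    using assms by (simp add: sum.If_cases Int_def)
  finally show "fps_nth (gen W wt) k = fps_nth (\<Sum>x\<in>W. fps_X ^ wt x) k" by (simp add: gen_nth)
qed

lemma gen_prod:
  assumes fa: "\<And>k. finite {a\<in>A. wa a = k}" and fb: "\<And>k. finite {b\<in>B. wb b = k}"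
  shows "gen (A \<times> B) (\<lambda>(a,b). wa a + wb b) = gen A wa * gen B wb"
proof (rule fps_ext)
  fix n
  have eq: "{x\<in>A \<times> B. (\<lambda>(a,b). wa a + wb b) x = n}
      = (\<Union>i\<in>{0..n}. {a\<in>A. wa a = i} \<times> {b\<in>B. wb b = n - i})"
    by auto
  have "card {x\<in>A \<times> B. (\<lambda>(a,b). wa a + wb b) x = n}
     = (\<Sum>i\<in>{0..n}. card ({a\<in>A. wa a = i} \<times> {b\<in>B. wb b = n - i}))"
    unfolding eq
    by (rule card_UN_disjoint) (auto simp: fa fb)
  then show "fps_nth (gen (A \<times> B) (\<lambda>(a,b). wa a + wb b)) n = fps_nth (gen A wa * gen B wb) n"
    by (simp add: gen_nth fps_mult_nth card_cartesian_product)
qed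

lemma gen_eqI:
  assumes "\<And>k. card {x\<in>W. wt x = k} = card (T k)"
  shows "gen W wt = Abs_fps (\<lambda>k. of_nat (card (T k)))"
  using assms by (simp add: gen_def)

definition detS :: "'i set \<Rightarrow> ('i \<Rightarrow> 'i \<Rightarrow> 'a::comm_ring_1) \<Rightarrow> 'a" where
  "detS S N = (\<Sum>p\<in>{p. p permutes S}. of_int (sign p) * (\<Prod>i\<in>S. N i (p i)))"

lemma det_detS: "det (M::'a::comm_ring_1^'n^'n) = detS UNIV (\<lambda>i j. M$i$j)"
  by (simp add: det_def detS_def)

lemma detS_cong:
  assumes "\<And>i j. i\<in>S \<Longrightarrow> j\<in>S \<Longrightarrow> N i j = N' i j"
  shows "detS S N = detS S N'"
  unfolding detS_def
proof (rule sum.cong[OF refl])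
  fix p assume "p \<in> {p. p permutes S}"
  then have "\<And>i. i \<in> S \<Longrightarrow> p i \<in> S" by (simp add: permutes_in_image)
  then show "of_int (sign p) * (\<Prod>i\<in>S. N i (p i)) = of_int (sign p) * (\<Prod>i\<in>S. N' i (p i))"
    using assms by (metis (no_types, lifting) prod.cong)
qed

lemma detS_empty: "detS {} N = 1"
  by (simp add: detS_def)

lemma detS_single: "detS {a} N = N a a"
  by (simp add: detS_def)


lemma detS_reindex:
  assumes inj: "inj_on f A" and fin: "finite A"
  shows "detS (f ` A) N = detS A (\<lambda>i j. N (f i) (f j))"
proof -
  have bij: "bij_betw f A (f ` A)" using inj by (simp add: bij_betw_imageI)
  let ?m = "map_permutation A f"
  have b2: "bij_betw ?m {p. p permutes A} {q. q permutes f ` A}"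
  proof (rule bij_betw_byWitness[where f' = "map_permutation (f ` A) (inv_into A f)"])
    show "\<forall>p\<in>{p. p permutes A}. map_permutation (f ` A) (inv_into A f) (?m p) = p"
      using map_permutation_compose_inv[OF bij] inj by auto
    show "\<forall>q\<in>{q. q permutes f ` A}. ?m (map_permutation (f ` A) (inv_into A f) q) = q"
    proof
      fix q assume q: "q \<in> {q. q permutes f ` A}"
      have bi: "bij_betw (inv_into A f) (f ` A) A" using bij by (rule bij_betw_inv_into)
      show "?m (map_permutation (f ` A) (inv_into A f) q) = q"
        by (rule map_permutation_compose_inv[OF bi]) (use q inj in auto)
    qed
    show "?m ` {p. p permutes A} \<subseteq> {q. q permutes f ` A}"
      using map_permutation_permutes[OF bij] by auto
    show "map_permutation (f ` A) (inv_into A f) ` {q. q permutes f ` A} \<subseteq> {p. p permutes A}"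
      using map_permutation_permutes[OF bij_betw_inv_into[OF bij]] by auto
  qed
  have "detS (f ` A) N = (\<Sum>p\<in>{p. p permutes A}. of_int (sign (?m p)) * (\<Prod>i\<in>f ` A. N i (?m p i)))"
    unfolding detS_def by (rule sum.reindex_bij_betw[OF b2, symmetric])
  also have "\<dots> = (\<Sum>p\<in>{p. p permutes A}. of_int (sign p) * (\<Prod>i\<in>A. N (f i) (f (p i))))"
  proof (rule sum.cong[OF refl])
    fix p assume p: "p \<in> {p. p permutes A}"
    have "sign (?m p) = sign p" using sign_map_permutation[OF inj _ fin] p by auto
    moreover have "(\<Prod>i\<in>f ` A. N i (?m p i)) = (\<Prod>i\<in>A. N (f i) (f (p i)))"
      by (subst prod.reindex[OF inj]) (simp add: map_permutation_apply[OF inj])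
    ultimately show "of_int (sign (?m p)) * (\<Prod>i\<in>f ` A. N i (?m p i)) = of_int (sign p) * (\<Prod>i\<in>A. N (f i) (f (p i)))"
      by simp
  qed
  finally show ?thesis by (simp add: detS_def)
qed

lemma perm_pres_compl:
  assumes p: "p permutes S" and finC: "finite C" and pC: "\<forall>i\<in>C. p i \<in> C" and i: "i \<in> S - C"
  shows "p i \<in> S - C"
proof -
  have injp: "inj p" using p by (rule permutes_inj)
  have ic: "inj_on p C" using injp by (rule inj_on_subset) simp
  have "p ` C \<subseteq> C" using pC by blast
  then have pCC: "p ` C = C" using endo_inj_surj[OF finC _ ic] by simp
  have "p i \<in> S" using i p by (simp add: permutes_in_image)
  moreover have "p i \<notin> C"
  proof
    assume "p i \<in> C"
    then obtain j where j: "j \<in> C" "p i = p j" using pCC by blast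
    then have "i = j" using injD[OF injp] by blast
    then show False using i j by simp
  qed
  ultimately show ?thesis by simp
qed

lemma restrict_perm_permutes:
  assumes p: "p permutes S" and finC: "finite C" and pC: "\<forall>i\<in>C. p i \<in> C"
  shows "(\<lambda>i. if i \<in> C then p i else i) permutes C"
proof (rule inj_imp_permutes[OF _ finC])
  have injp: "inj p" using p by (rule permutes_inj)
  show "inj_on (\<lambda>i. if i \<in> C then p i else i) C"
  proof (rule inj_onI)
    fix x y assume "x \<in> C" "y \<in> C" "(if x \<in> C then p x else x) = (if y \<in> C then p y else y)"
    then have "p x = p y" by simp
    then show "x = y" using injD[OF injp] by blast
  qed
  show "\<And>x. x \<in> C \<Longrightarrow> (if x \<in> C then p x else x) \<in> C" using pC by simp
  show "\<And>x. x \<notin> C \<Longrightarrow> (if x \<in> C then p x else x) = x" by simp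
qed

lemma detS_block:
  fixes N :: "'i \<Rightarrow> 'i \<Rightarrow> 'a::comm_ring_1"
  assumes fin: "finite S" and CS: "C \<subseteq> S"
    and z: "\<And>i j. i \<in> C \<Longrightarrow> j \<in> S - C \<Longrightarrow> N i j = 0"
  shows "detS S N = detS C N * detS (S - C) N"
proof -
  define D where "D = S - C"
  let ?t = "\<lambda>S p. of_int (sign p) * (\<Prod>i\<in>S. N i (p i)) :: 'a"
  let ?P' = "{p. p permutes S \<and> (\<forall>i\<in>C. p i \<in> C)}"
  let ?PC = "{p. p permutes C}" and ?PD = "{p. p permutes D}"
  have finC: "finite C" using fin CS finite_subset by blast
  have finD: "finite D" using fin D_def by simp
  have SU: "S = C \<union> D" "C \<inter> D = {}" using CS unfolding D_def by auto
  have e1: "detS S N = sum (?t S) ?P'"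
    unfolding detS_def
  proof (rule sum.mono_neutral_right)
    show "finite {p. p permutes S}" using fin by (simp add: finite_permutations)
    show "?P' \<subseteq> {p. p permutes S}" by blast
    show "\<forall>p\<in>{p. p permutes S} - ?P'. ?t S p = 0"
    proof
      fix p assume "p \<in> {p. p permutes S} - ?P'"
      then obtain i where p: "p permutes S" and i: "i \<in> C" "p i \<notin> C" by blast
      have "p i \<in> S" using p i CS by (simp add: permutes_in_image subsetD)
      then have "N i (p i) = 0" using z i by simp
      moreover have "i \<in> S" using i CS by blast
      ultimately have "(\<Prod>i\<in>S. N i (p i)) = 0" using fin by (rule_tac prod_zero) blast+
      then show "?t S p = 0" by simp
    qed
  qed
  define h where "h = (\<lambda>x::('i\<Rightarrow>'i)\<times>('i\<Rightarrow>'i). fst x \<circ> snd x)"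
  define h' where "h' = (\<lambda>p::'i\<Rightarrow>'i. (\<lambda>i. if i \<in> C then p i else i, \<lambda>i. if i \<in> D then p i else i))"
  have bqr: "bij_betw h (?PC \<times> ?PD) ?P'"
  proof (rule bij_betw_byWitness[where f' = h'])
    show "\<forall>a\<in>?PC \<times> ?PD. h' (h a) = a"
    proof
      fix a assume a: "a \<in> ?PC \<times> ?PD"
      obtain q r where qr: "a = (q, r)" "q permutes C" "r permutes D" using a by (cases a) simp
      have h1: "(\<lambda>i. if i \<in> C then (q \<circ> r) i else i) = q"
      proof
        fix i show "(if i \<in> C then (q \<circ> r) i else i) = q i"
        proof (cases "i \<in> C")
          case True
          then have "i \<notin> D" using SU by blast
          then have "r i = i" by (rule permutes_not_in[OF qr(3)])
          then show ?thesis using True by simp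
        next
          case False
          then show ?thesis using permutes_not_in[OF qr(2) False] by simp
        qed
      qed
      have h2: "(\<lambda>i. if i \<in> D then (q \<circ> r) i else i) = r"
      proof
        fix i show "(if i \<in> D then (q \<circ> r) i else i) = r i"
        proof (cases "i \<in> D")
          case True
          then have "r i \<in> D" using qr(3) by (simp add: permutes_in_image)
          then have "r i \<notin> C" using SU by blast
          then have "q (r i) = r i" by (rule permutes_not_in[OF qr(2)])
          then show ?thesis using True by simp
        next
          case False
          then show ?thesis using permutes_not_in[OF qr(3) False] by simp
        qed
      qed
      show "h' (h a) = a" unfolding h_def h'_def qr(1) fst_conv snd_conv h1 h2 ..
    qed
    show "\<forall>p\<in>?P'. h (h' p) = p"
    proof
      fix p assume p: "p \<in> ?P'"
      then have pS: "p permutes S" and pC: "\<forall>i\<in>C. p i \<in> C" by auto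
      show "h (h' p) = p"
      proof
        fix i
        show "h (h' p) i = p i"
        proof (cases "i \<in> C")
          case True
          then have "i \<notin> D" using SU by blast
          then show ?thesis using True by (simp add: h_def h'_def)
        next
          case False
          show ?thesis
          proof (cases "i \<in> D")
            case True
            then have "p i \<in> D" using perm_pres_compl[OF pS finC pC] unfolding D_def by blast
            then have "p i \<notin> C" using SU by blast
            then show ?thesis using True by (simp add: h_def h'_def)
          next
            case F2: False
            then have "i \<notin> S" using False SU by blast
            then have "p i = i" by (rule permutes_not_in[OF pS])
            then show ?thesis using False F2 by (simp add: h_def h'_def)
          qed
        qed
      qed
    qed
    show "h ` (?PC \<times> ?PD) \<subseteq> ?P'"
    proof
      fix x assume "x \<in> h ` (?PC \<times> ?PD)"
      then obtain q r where x: "x = q \<circ> r" "q permutes C" "r permutes D" by (auto simp: h_def)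
      have "q permutes S" using x(2) CS permutes_subset by blast
      moreover have "r permutes S" using x(3) D_def permutes_subset by blast
      ultimately have "x permutes S" using x(1) by (simp add: permutes_compose)
      moreover have "\<forall>i\<in>C. x i \<in> C"
      proof
        fix i assume i: "i \<in> C"
        then have "i \<notin> D" using SU by blast
        then have "r i = i" by (rule permutes_not_in[OF x(3)])
        then show "x i \<in> C" using x(1) i x(2) by (simp add: permutes_in_image)
      qed
      ultimately show "x \<in> ?P'" by simp
    qed
    show "h' ` ?P' \<subseteq> ?PC \<times> ?PD"
    proof
      fix y assume "y \<in> h' ` ?P'"
      then obtain p where y: "y = h' p" and p: "p permutes S" "\<forall>i\<in>C. p i \<in> C" by blast
      have pD: "\<forall>i\<in>D. p i \<in> D" using perm_pres_compl[OF p(1) finC p(2)] unfolding D_def by blast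
      have "(\<lambda>i. if i \<in> C then p i else i) permutes C"
        by (rule restrict_perm_permutes[OF p(1) finC p(2)])
      moreover have "(\<lambda>i. if i \<in> D then p i else i) permutes D"
        by (rule restrict_perm_permutes[OF p(1) finD pD])
      ultimately show "y \<in> ?PC \<times> ?PD" using y by (simp add: h'_def)
    qed
  qed
  have "detS S N = (\<Sum>x\<in>?PC \<times> ?PD. ?t S (h x))"
    unfolding e1 by (rule sum.reindex_bij_betw[OF bqr, symmetric])
  also have "\<dots> = (\<Sum>x\<in>?PC \<times> ?PD. ?t C (fst x) * ?t D (snd x))"
  proof (rule sum.cong[OF refl])
    fix x assume "x \<in> ?PC \<times> ?PD"
    then have q: "fst x permutes C" and r: "snd x permutes D" by auto
    have "sign (fst x \<circ> snd x) = sign (fst x) * sign (snd x)"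
      using q r finC finD by (simp add: sign_compose permutes_imp_permutation)
    moreover have "(\<Prod>i\<in>S. N i ((fst x \<circ> snd x) i)) = (\<Prod>i\<in>C. N i (fst x i)) * (\<Prod>i\<in>D. N i (snd x i))"
    proof -
      have "(\<Prod>i\<in>S. N i ((fst x \<circ> snd x) i)) = (\<Prod>i\<in>C. N i ((fst x \<circ> snd x) i)) * (\<Prod>i\<in>D. N i ((fst x \<circ> snd x) i))"
        unfolding SU(1) by (rule prod.union_disjoint) (use finC finD SU in auto)
      moreover have "(\<Prod>i\<in>C. N i ((fst x \<circ> snd x) i)) = (\<Prod>i\<in>C. N i (fst x i))"
      proof (rule prod.cong[OF refl])
        fix i assume "i \<in> C" then have "i \<notin> D" using SU by blast
        then show "N i ((fst x \<circ> snd x) i) = N i (fst x i)" using permutes_not_in[OF r] by simp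
      qed
      moreover have "(\<Prod>i\<in>D. N i ((fst x \<circ> snd x) i)) = (\<Prod>i\<in>D. N i (snd x i))"
      proof (rule prod.cong[OF refl])
        fix i assume "i \<in> D" then have "snd x i \<in> D" using r by (simp add: permutes_in_image)
        then have "snd x i \<notin> C" using SU by blast
        then show "N i ((fst x \<circ> snd x) i) = N i (snd x i)" using permutes_not_in[OF q] by simp
      qed
      ultimately show ?thesis by simp
    qed
    ultimately show "?t S (h x) = ?t C (fst x) * ?t D (snd x)" by (simp add: h_def algebra_simps)
  qed
  also have "\<dots> = (\<Sum>q\<in>?PC. \<Sum>r\<in>?PD. ?t C q * ?t D r)"
    by (simp only: sum.cartesian_product split_def)
  also have "\<dots> = sum (?t C) ?PC * sum (?t D) ?PD"
    by (rule sum_product[symmetric])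
  finally show ?thesis unfolding detS_def D_def .
qed


definition Nm :: "('i \<Rightarrow> 'i) \<Rightarrow> 'i \<Rightarrow> 'i \<Rightarrow> complex fps" where
  "Nm p i j = (if i = j then 1 else 0) - (if j = p i then fps_X else 0)"

definition FixS :: "'i set \<Rightarrow> ('i \<Rightarrow> 'i) \<Rightarrow> ('i \<Rightarrow> nat) set" where
  "FixS S p = {n. (\<forall>i. i \<notin> S \<longrightarrow> n i = 0) \<and> (\<forall>i. n (p i) = n i)}"

definition wtS :: "'i set \<Rightarrow> ('i \<Rightarrow> nat) \<Rightarrow> nat" where
  "wtS S n = (\<Sum>i\<in>S. n i)"

lemma sign_cycle:
  assumes "distinct cs" "cs \<noteq> []"
  shows "sign (cycle_of_list cs) = (-1) ^ (length cs - 1)"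
  using assms
proof (induction cs rule: cycle_of_list.induct)
  case (1 i j cs)
  then have ij: "i \<noteq> j" by auto
  have "sign (cycle_of_list (i # j # cs)) = sign (Transposition.transpose i j) * sign (cycle_of_list (j # cs))"
    by (simp add: sign_compose permutation_swap_id permutation_of_cycle)
  also have "\<dots> = - ((-1) ^ (length (j # cs) - 1))"
    using 1 ij by (simp add: sign_swap_id)
  also have "\<dots> = (-1) ^ (length (i # j # cs) - 1)" by simp
  finally show ?case .
next
  case ("2_1") then show ?case by simp
next
  case ("2_2" v) then show ?case by (simp add: sign_id)
qed

lemma cycle_nth:
  assumes "distinct cs" "i < length cs"
  shows "cycle_of_list cs (cs ! i) = cs ! (Suc i mod length cs)"
proof -
  have "map (cycle_of_list cs ^^ 1) cs = rotate 1 cs" by (rule cyclic_rotation[OF assms(1)])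
  then have "map (cycle_of_list cs) cs = rotate1 cs" by simp
  then have "map (cycle_of_list cs) cs ! i = rotate1 cs ! i" by simp
  moreover have "cs \<noteq> []" using assms(2) by auto
  ultimately show ?thesis using assms(2) by (simp add: nth_rotate1[OF assms(2)])
qed

lemma cycle_reach:
  assumes d: "distinct cs" and i: "i < length cs"
    and F: "\<And>x. x \<in> set cs \<Longrightarrow> Q x \<Longrightarrow> Q (cycle_of_list cs x)" and Qi: "Q (cs ! i)"
  shows "\<forall>y\<in>set cs. Q y"
proof -
  let ?L = "length cs"
  have L: "?L > 0" using i by (metis gr_zeroI less_nat_zero_code)
  have k: "Q (cs ! ((i + k) mod ?L))" for k
  proof (induction k)
    case 0 then show ?case using Qi i by simp
  next
    case (Suc k)
    have m: "(i + k) mod ?L < ?L" using L by simp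
    have "cycle_of_list cs (cs ! ((i + k) mod ?L)) = cs ! (Suc ((i + k) mod ?L) mod ?L)"
      by (rule cycle_nth[OF d m])
    also have "Suc ((i + k) mod ?L) mod ?L = (i + Suc k) mod ?L" by (simp add: mod_Suc_eq)
    finally have e: "cycle_of_list cs (cs ! ((i + k) mod ?L)) = cs ! ((i + Suc k) mod ?L)" .
    have "cs ! ((i + k) mod ?L) \<in> set cs" using m by simp
    then have "Q (cycle_of_list cs (cs ! ((i + k) mod ?L)))" using F Suc by blast
    then show ?case using e by simp
  qed
  show ?thesis
  proof
    fix y assume "y \<in> set cs"
    then obtain j where j: "j < ?L" "y = cs ! j" by (auto simp: in_set_conv_nth)
    have "(i + (j + ?L - i)) mod ?L = j" using j i by simp
    then show "Q y" using k[of "j + ?L - i"] j by simp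
  qed
qed

lemma cycle_closed:
  assumes "distinct cs" "x \<in> set cs" shows "cycle_of_list cs x \<in> set cs"
  using cycle_permutes[of cs] assms(2) by (simp add: permutes_in_image)

lemma cycle_no_fix:
  assumes d: "distinct cs" and L: "length cs \<ge> 2" and x: "x \<in> set cs"
  shows "cycle_of_list cs x \<noteq> x"
proof -
  obtain i where i: "i < length cs" "x = cs ! i" using x by (auto simp: in_set_conv_nth)
  have "Suc i mod length cs \<noteq> i"
  proof (cases "Suc i < length cs")
    case True then show ?thesis by simp
  next
    case False then have "Suc i = length cs" using i by simp
    then show ?thesis using L by simp
  qed
  moreover have "Suc i mod length cs < length cs" by (rule mod_less_divisor) (use i in auto)
  ultimately have "cs ! (Suc i mod length cs) \<noteq> cs ! i" using d i by (simp add: nth_eq_iff_index_eq)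
  then show ?thesis using cycle_nth[OF d i(1)] i by simp
qed

lemma sgn_pow: "((-1::'a::comm_ring_1)^m) * (- x)^Suc m = - (x^Suc m)"
proof -
  have "(- x)^Suc m = (-1)^Suc m * x^Suc m" by (rule power_minus)
  then have "((-1::'a)^m) * (- x)^Suc m = - (((-1)^m * (-1)^m) * x^Suc m)" by (simp add: algebra_simps)
  then show ?thesis by (simp add: minus_one_mult_self)
qed

lemma detS_cycle:
  assumes d: "distinct cs" and ne: "cs \<noteq> []"
  shows "detS (set cs) (Nm (cycle_of_list cs)) = 1 - fps_X ^ length cs"
proof -
  let ?c = "cycle_of_list cs" and ?C = "set cs" and ?L = "length cs"
  have finC: "finite ?C" by simp
  have cardC: "card ?C = ?L" using d by (simp add: distinct_card)
  have cperm: "?c permutes ?C" by (rule cycle_permutes)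
  let ?t = "\<lambda>p. of_int (sign p) * (\<Prod>i\<in>?C. Nm ?c i (p i))"
  have key: "p = id \<or> p = ?c" if p: "p permutes ?C" and nz: "\<forall>i\<in>?C. Nm ?c i (p i) \<noteq> 0" for p
  proof -
    have alt: "p i = i \<or> p i = ?c i" if "i \<in> ?C" for i
      using nz that by (auto simp: Nm_def split: if_splits)
    have injp: "inj p" using p by (rule permutes_inj)
    define F where "F = {i\<in>?C. p i \<noteq> i}"
    show ?thesis
    proof (cases "F = {}")
      case True
      have "p i = i" for i
      proof (cases "i \<in> ?C")
        case True then show ?thesis using \<open>F = {}\<close> F_def by blast
      next
        case False then show ?thesis using permutes_not_in[OF p] by simp
      qed
      then show ?thesis by (simp add: fun_eq_iff)
    next
      case False
      then obtain x where xF: "x \<in> F" by blast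
      then have xC: "x \<in> ?C" using F_def by simp
      then obtain i where i: "i < ?L" "x = cs ! i" by (auto simp: in_set_conv_nth)
      have clos: "?c y \<in> F" if "y \<in> ?C" "y \<in> F" for y
      proof -
        have py: "p y = ?c y" using alt[OF that(1)] that(2) F_def by auto
        have cy: "?c y \<in> ?C" using cycle_closed[OF d that(1)] .
        show ?thesis
        proof (rule ccontr)
          assume "?c y \<notin> F"
          then have "p (?c y) = ?c y" using cy F_def by simp
          then have "p (?c y) = p y" using py by simp
          then have "?c y = y" using injD[OF injp] by blast
          then show False using py that(2) F_def by simp
        qed
      qed
      have allF: "\<forall>y\<in>?C. y \<in> F"
        by (rule cycle_reach[OF d i(1)]) (use clos xF i in auto)
      have "p y = ?c y" for y
      proof (cases "y \<in> ?C")
        case True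
        then have "y \<in> F" using allF by blast
        then show ?thesis using alt[OF True] F_def by auto
      next
        case False
        then show ?thesis using permutes_not_in[OF p False] permutes_not_in[OF cperm False] by simp
      qed
      then show ?thesis by (simp add: fun_eq_iff)
    qed
  qed
  show ?thesis
  proof (cases "?L = 1")
    case True
    then obtain a where a: "cs = [a]" by (cases cs) auto
    then show ?thesis by (simp add: detS_single Nm_def)
  next
    case False
    have "?L > 0" using ne by simp
    then have L2: "?L \<ge> 2" using False by linarith
    have cid: "?c \<noteq> id"
    proof
      assume "?c = id"
      then have "?c (cs ! 0) = cs ! 0" by simp
      then show False using cycle_no_fix[OF d L2] ne by simp
    qed
    have "detS ?C (Nm ?c) = sum ?t {id, ?c}"
      unfolding detS_def
    proof (rule sum.mono_neutral_left[symmetric])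
      show "finite {p. p permutes ?C}" using finC by (rule finite_permutations)
      show "{id, ?c} \<subseteq> {p. p permutes ?C}" using cperm by (simp add: permutes_id)
      show "\<forall>p\<in>{p. p permutes ?C} - {id, ?c}. ?t p = 0"
      proof
        fix p assume p: "p \<in> {p. p permutes ?C} - {id, ?c}"
        then have "\<not> (\<forall>i\<in>?C. Nm ?c i (p i) \<noteq> 0)" using key by blast
        then have "(\<Prod>i\<in>?C. Nm ?c i (p i)) = 0" using finC by (simp add: prod_zero)
        then show "?t p = 0" by simp
      qed
    qed
    also have "\<dots> = ?t id + ?t ?c" using cid by (simp add: sum.insert)
    also have "?t id = 1"
    proof -
      have "(\<Prod>i\<in>?C. Nm ?c i (id i)) = (\<Prod>i\<in>?C. 1)"
      proof (rule prod.cong[OF refl])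
        fix i assume "i \<in> ?C"
        then have "?c i \<noteq> i" by (rule cycle_no_fix[OF d L2])
        then show "Nm ?c i (id i) = 1" by (simp add: Nm_def)
      qed
      then show ?thesis by simp
    qed
    also have "?t ?c = - (fps_X ^ ?L)"
    proof -
      have "(\<Prod>i\<in>?C. Nm ?c i (?c i)) = (\<Prod>i\<in>?C. - fps_X)"
      proof (rule prod.cong[OF refl])
        fix i assume "i \<in> ?C"
        then have "?c i \<noteq> i" by (rule cycle_no_fix[OF d L2])
        then show "Nm ?c i (?c i) = - fps_X" by (simp add: Nm_def)
      qed
      then have pr: "(\<Prod>i\<in>?C. Nm ?c i (?c i)) = (- fps_X) ^ ?L" using cardC by simp
      obtain m where m: "?L = Suc m" using ne by (cases cs) auto
      have s: "sign ?c = (-1) ^ m" using sign_cycle[OF d ne] m by simp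
      have "?t ?c = of_int ((-1) ^ m) * (- fps_X) ^ Suc m" unfolding pr s m ..
      also have "\<dots> = (-1) ^ m * (- fps_X) ^ Suc m" by simp
      also have "\<dots> = - (fps_X ^ Suc m)" by (rule sgn_pow)
      finally show ?thesis using m by simp
    qed
    finally show ?thesis by simp
  qed
qed

lemma gen_bij:
  assumes b: "bij_betw f W W'" and w: "\<And>x. x \<in> W \<Longrightarrow> wt' (f x) = wt x"
  shows "gen W' wt' = gen W wt"
proof (rule fps_ext)
  fix k
  have "bij_betw f {x\<in>W. wt x = k} {y\<in>W'. wt' y = k}"
  proof -
    have "bij_betw f {x\<in>W. wt x = k} (f ` {x\<in>W. wt x = k})"
      by (rule bij_betw_subset[OF b]) auto
    moreover have "f ` {x\<in>W. wt x = k} = {y\<in>W'. wt' y = k}"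
    proof
      show "f ` {x\<in>W. wt x = k} \<subseteq> {y\<in>W'. wt' y = k}" using b w by (auto simp: bij_betw_def)
      show "{y\<in>W'. wt' y = k} \<subseteq> f ` {x\<in>W. wt x = k}"
      proof
        fix y assume y: "y \<in> {y\<in>W'. wt' y = k}"
        then obtain x where "x \<in> W" "y = f x" using b by (auto simp: bij_betw_def)
        then show "y \<in> f ` {x\<in>W. wt x = k}" using y w by auto
      qed
    qed
    ultimately show ?thesis by simp
  qed
  then show "fps_nth (gen W' wt') k = fps_nth (gen W wt) k"
    by (simp add: gen_nth bij_betw_same_card)
qed

lemma fix_level_finite:
  assumes "finite S" shows "finite {n\<in>FixS S p. wtS S n = k}"
proof (rule finite_subset)
  show "{n\<in>FixS S p. wtS S n = k} \<subseteq> (\<lambda>f i. if i \<in> S then f i else 0) ` (PiE S (\<lambda>_. {..k}))"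
  proof
    fix n assume n: "n \<in> {n\<in>FixS S p. wtS S n = k}"
    have "n = (\<lambda>i. if i \<in> S then restrict n S i else 0)"
      using n by (auto simp: FixS_def fun_eq_iff)
    moreover have "restrict n S \<in> PiE S (\<lambda>_. {..k})"
    proof -
      have "n i \<le> k" if "i \<in> S" for i
        using n member_le_sum[of i S n] that assms by (auto simp: wtS_def)
      then show ?thesis by auto
    qed
    ultimately show "n \<in> (\<lambda>f i. if i \<in> S then f i else 0) ` (PiE S (\<lambda>_. {..k}))" by blast
  qed
  show "finite ((\<lambda>f i. if i \<in> S then f i else 0) ` (PiE S (\<lambda>_. {..k})))"
    using assms by (intro finite_imageI finite_PiE) auto
qed

lemma gen_empty: "gen (FixS {} p) (wtS {}) = 1"
proof (rule fps_ext)
  fix k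
  have "{n \<in> FixS {} p. wtS {} n = k} = (if k = 0 then {\<lambda>_. 0} else {})"
    by (auto simp: FixS_def wtS_def fun_eq_iff)
  then show "fps_nth (gen (FixS {} p) (wtS {})) k = fps_nth 1 k" by (simp add: gen_nth)
qed

lemma gen_cycle:
  assumes d: "distinct cs"
  shows "detS (set cs) (Nm (cycle_of_list cs)) * gen (FixS (set cs) (cycle_of_list cs)) (wtS (set cs)) = 1"
proof (cases "cs = []")
  case True
  then show ?thesis using True by (simp add: detS_empty gen_empty)
next
  case False
  let ?c = "cycle_of_list cs" and ?C = "set cs" and ?L = "length cs"
  have L: "?L > 0" using False by simp
  have cardC: "card ?C = ?L" using d by (simp add: distinct_card)
  define f where "f = Abs_fps (\<lambda>k. if ?L dvd k then 1 else 0 :: complex)"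
  have g: "gen (FixS ?C ?c) (wtS ?C) = f"
  proof (rule fps_ext)
    fix k
    have eq: "{n\<in>FixS ?C ?c. wtS ?C n = k} = (\<lambda>m i. if i \<in> ?C then m else 0) ` {m. ?L * m = k}"
    proof
      show "{n\<in>FixS ?C ?c. wtS ?C n = k} \<subseteq> (\<lambda>m i. if i \<in> ?C then m else 0) ` {m. ?L * m = k}"
      proof
        fix n assume n: "n \<in> {n\<in>FixS ?C ?c. wtS ?C n = k}"
        have const: "\<forall>y\<in>?C. n y = n (cs ! 0)"
          by (rule cycle_reach[OF d L]) (use n in \<open>auto simp: FixS_def\<close>)
        have nf: "n = (\<lambda>i. if i \<in> ?C then n (cs ! 0) else 0)"
          using const n by (auto simp: FixS_def fun_eq_iff)
        have "wtS ?C n = ?L * n (cs ! 0)"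
          using const cardC by (simp add: wtS_def)
        then show "n \<in> (\<lambda>m i. if i \<in> ?C then m else 0) ` {m. ?L * m = k}"
          using n nf by (intro image_eqI[where x="n (cs ! 0)"]) auto
      qed
      show "(\<lambda>m i. if i \<in> ?C then m else 0) ` {m. ?L * m = k} \<subseteq> {n\<in>FixS ?C ?c. wtS ?C n = k}"
      proof
        fix n assume "n \<in> (\<lambda>m i. if i \<in> ?C then m else 0) ` {m. ?L * m = k}"
        then obtain m where m: "?L * m = k" "n = (\<lambda>i. if i \<in> ?C then m else 0)" by blast
        have "n (?c i) = n i" for i
        proof (cases "i \<in> ?C")
          case True then show ?thesis using m cycle_closed[OF d True] by simp
        next
          case False then show ?thesis using m permutes_not_in[OF cycle_permutes False] by simp
        qed
        moreover have "wtS ?C n = k" using m cardC by (simp add: wtS_def)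
        ultimately show "n \<in> {n\<in>FixS ?C ?c. wtS ?C n = k}" using m by (simp add: FixS_def)
      qed
    qed
    have inj: "inj (\<lambda>m i. if i \<in> ?C then m else (0::nat))"
    proof (rule injI)
      fix x y assume "(\<lambda>i. if i \<in> ?C then x else (0::nat)) = (\<lambda>i. if i \<in> ?C then y else 0)"
      then have "(if cs ! 0 \<in> ?C then x else 0) = (if cs ! 0 \<in> ?C then y else 0)" by metis
      then show "x = y" using L by simp
    qed
    have "card {n\<in>FixS ?C ?c. wtS ?C n = k} = card {m. ?L * m = k}"
      unfolding eq by (rule card_image) (rule inj_on_subset[OF inj], simp)
    also have "{m. ?L * m = k} = (if ?L dvd k then {k div ?L} else {})"
      using L by auto
    finally show "fps_nth (gen (FixS ?C ?c) (wtS ?C)) k = fps_nth f k"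
      by (simp add: gen_nth f_def)
  qed
  have "(1 - fps_X ^ ?L) * f = 1"
  proof (rule fps_ext)
    fix n
    have "fps_nth ((1 - fps_X ^ ?L) * f) n = fps_nth f n - fps_nth (fps_X ^ ?L * f) n"
      by (simp add: algebra_simps)
    also have "\<dots> = fps_nth f n - (if n < ?L then 0 else fps_nth f (n - ?L))"
      by (simp add: fps_X_power_mult_nth)
    also have "\<dots> = fps_nth 1 n"
    proof (cases "n < ?L")
      case True
      then show ?thesis using L by (cases "n = 0") (auto simp: f_def dest: dvd_imp_le)
    next
      case False
      then have "n = (n - ?L) + ?L" by simp
      then have "?L dvd n \<longleftrightarrow> ?L dvd (n - ?L)" by (metis dvd_add_left_iff dvd_refl)
      then have e: "fps_nth f n = fps_nth f (n - ?L)" by (simp add: f_def)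
      have n0: "n \<noteq> 0" using False L by linarith
      show ?thesis using False n0 e by simp
    qed
    finally show "fps_nth ((1 - fps_X ^ ?L) * f) n = fps_nth 1 n" .
  qed
  then show ?thesis using detS_cycle[OF d False] g by simp
qed

lemma cycle_decomp_perm:
  assumes "cycle_decomp S p" shows "p permutes S \<and> finite S"
  using assms
proof (induction rule: cycle_decomp.induct)
  case empty then show ?case by (metis finite.emptyI permutes_id)
next
  case (comp I p cs)
  have "cycle_of_list cs permutes set cs \<union> I"
    using cycle_permutes permutes_subset by (metis sup_ge1)
  moreover have "p permutes set cs \<union> I" using comp permutes_subset by (metis sup_ge2)
  ultimately have "cycle_of_list cs \<circ> p permutes set cs \<union> I" by (rule permutes_compose[rotated])
  moreover have "finite (set cs \<union> I)" using comp by simp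
  ultimately show ?case by blast
qed

lemma gen_decomp:
  assumes "cycle_decomp S p"
  shows "detS S (Nm p) * gen (FixS S p) (wtS S) = 1"
  using assms
proof (induction rule: cycle_decomp.induct)
  case empty
  show ?case by (simp add: detS_empty gen_empty)
next
  case (comp I p cs)
  let ?c = "cycle_of_list cs" and ?C = "set cs"
  let ?p = "?c \<circ> p" and ?S = "set cs \<union> I"
  have pI: "p permutes I" and finI: "finite I" using cycle_decomp_perm[OF comp.hyps(1)] by auto
  have cC: "?c permutes ?C" by (rule cycle_permutes)
  have disj: "?C \<inter> I = {}" using comp.hyps by blast
  have finS: "finite ?S" using finI by simp
  have SC: "?S - ?C = I" using disj by blast
  have pC: "?c (p i) = ?c i" if "i \<in> ?C" for i
  proof -
    have "i \<notin> I" using that disj by blast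
    then show ?thesis using permutes_not_in[OF pI] by simp
  qed
  have pIe: "?c (p i) = p i" and pII: "p i \<in> I" if "i \<in> I" for i
  proof -
    show "p i \<in> I" using that pI by (simp add: permutes_in_image)
    then have "p i \<notin> ?C" using disj by blast
    then show "?c (p i) = p i" using permutes_not_in[OF cC] by simp
  qed
  have det: "detS ?S (Nm ?p) = detS ?C (Nm ?c) * detS I (Nm p)"
  proof -
    have "detS ?S (Nm ?p) = detS ?C (Nm ?p) * detS (?S - ?C) (Nm ?p)"
    proof (rule detS_block[OF finS])
      show "?C \<subseteq> ?S" by blast
      fix i j assume i: "i \<in> ?C" and j: "j \<in> ?S - ?C"
      have "?p i \<in> ?C" using pC[OF i] cycle_closed[OF comp.hyps(2) i] by simp
      moreover have "j \<notin> ?C" using j by blast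
      ultimately have "j \<noteq> ?p i" "i \<noteq> j" using i by auto
      then show "Nm ?p i j = 0" by (simp add: Nm_def)
    qed
    moreover have "detS ?C (Nm ?p) = detS ?C (Nm ?c)"
      by (rule detS_cong) (simp add: Nm_def pC)
    moreover have "detS (?S - ?C) (Nm ?p) = detS I (Nm p)"
      unfolding SC by (rule detS_cong) (simp add: Nm_def pIe)
    ultimately show ?thesis by simp
  qed
  have gsplit: "gen (FixS ?S ?p) (wtS ?S) = gen (FixS ?C ?c) (wtS ?C) * gen (FixS I p) (wtS I)"
  proof -
    define f where "f = (\<lambda>n::'a\<Rightarrow>nat. (\<lambda>i. if i \<in> ?C then n i else 0, \<lambda>i. if i \<in> I then n i else 0))"
    define g where "g = (\<lambda>x::('a\<Rightarrow>nat)\<times>('a\<Rightarrow>nat). \<lambda>i. fst x i + snd x i)"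
    have bij: "bij_betw f (FixS ?S ?p) (FixS ?C ?c \<times> FixS I p)"
    proof (rule bij_betw_byWitness[where f' = g])
      show "\<forall>n\<in>FixS ?S ?p. g (f n) = n"
      proof
        fix n assume "n \<in> FixS ?S ?p"
        then have "\<And>i. i \<notin> ?S \<Longrightarrow> n i = 0" by (simp add: FixS_def)
        then show "g (f n) = n" using disj by (auto simp: f_def g_def fun_eq_iff)
      qed
      show "\<forall>x\<in>FixS ?C ?c \<times> FixS I p. f (g x) = x"
      proof
        fix x assume x: "x \<in> FixS ?C ?c \<times> FixS I p"
        then have z1: "\<And>i. i \<notin> ?C \<Longrightarrow> fst x i = 0" and z2: "\<And>i. i \<notin> I \<Longrightarrow> snd x i = 0"
          by (auto simp: FixS_def)
        have "(\<lambda>i. if i \<in> ?C then fst x i + snd x i else 0) = fst x"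
        proof
          fix i show "(if i \<in> ?C then fst x i + snd x i else 0) = fst x i"
            using z1 z2 disj by (cases "i \<in> ?C") auto
        qed
        moreover have "(\<lambda>i. if i \<in> I then fst x i + snd x i else 0) = snd x"
        proof
          fix i show "(if i \<in> I then fst x i + snd x i else 0) = snd x i"
            using z1 z2 disj by (cases "i \<in> I") auto
        qed
        ultimately show "f (g x) = x" by (simp add: f_def g_def)
      qed
      show "f ` FixS ?S ?p \<subseteq> FixS ?C ?c \<times> FixS I p"
      proof
        fix y assume "y \<in> f ` FixS ?S ?p"
        then obtain n where y: "y = f n" and n: "n \<in> FixS ?S ?p" by blast
        have nfix: "\<And>i. n (?p i) = n i" using n by (simp add: FixS_def)
        have "(\<lambda>i. if i \<in> ?C then n i else 0) (?c i) = (\<lambda>i. if i \<in> ?C then n i else 0) i" for i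
        proof (cases "i \<in> ?C")
          case True then show ?thesis using cycle_closed[OF comp.hyps(2) True] nfix[of i] pC[OF True] by simp
        next
          case False then show ?thesis using permutes_not_in[OF cC False] by simp
        qed
        moreover have "(\<lambda>i. if i \<in> I then n i else 0) (p i) = (\<lambda>i. if i \<in> I then n i else 0) i" for i
        proof (cases "i \<in> I")
          case True then show ?thesis using pII[OF True] nfix[of i] pIe[OF True] by simp
        next
          case False then show ?thesis using permutes_not_in[OF pI False] by simp
        qed
        ultimately show "y \<in> FixS ?C ?c \<times> FixS I p" using y by (simp add: f_def FixS_def)
      qed
      show "g ` (FixS ?C ?c \<times> FixS I p) \<subseteq> FixS ?S ?p"
      proof
        fix y assume "y \<in> g ` (FixS ?C ?c \<times> FixS I p)"
        then obtain a b where y: "y = g (a, b)" and a: "a \<in> FixS ?C ?c" and b: "b \<in> FixS I p" by blast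
        have za: "\<And>i. i \<notin> ?C \<Longrightarrow> a i = 0" and fa: "\<And>i. a (?c i) = a i" using a by (auto simp: FixS_def)
        have zb: "\<And>i. i \<notin> I \<Longrightarrow> b i = 0" and fb: "\<And>i. b (p i) = b i" using b by (auto simp: FixS_def)
        have "a (?p i) + b (?p i) = a i + b i" for i
        proof (cases "i \<in> ?C")
          case True
          have "?c i \<in> ?C" using cycle_closed[OF comp.hyps(2) True] .
          then have "?c i \<notin> I" "i \<notin> I" using True disj by auto
          then show ?thesis using pC[OF True] fa[of i] zb by simp
        next
          case False
          show ?thesis
          proof (cases "i \<in> I")
            case True
            have "p i \<notin> ?C" "i \<notin> ?C" using pII[OF True] False disj by auto
            then show ?thesis using pIe[OF True] fb[of i] za by simp
          next
            case F2: False
            then show ?thesis using permutes_not_in[OF pI F2] permutes_not_in[OF cC False] by simp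
          qed
        qed
        moreover have "\<And>i. i \<notin> ?S \<Longrightarrow> a i + b i = 0" using za zb by simp
        ultimately show "y \<in> FixS ?S ?p" using y by (simp add: g_def FixS_def)
      qed
    qed
    have w: "(\<lambda>(a,b). wtS ?C a + wtS I b) (f n) = wtS ?S n" if "n \<in> FixS ?S ?p" for n
    proof -
      have "wtS ?S n = wtS ?C n + wtS I n"
        unfolding wtS_def using disj finI by (simp add: sum.union_disjoint)
      moreover have "wtS ?C (\<lambda>i. if i \<in> ?C then n i else 0) = wtS ?C n" by (simp add: wtS_def)
      moreover have "wtS I (\<lambda>i. if i \<in> I then n i else 0) = wtS I n" by (simp add: wtS_def)
      ultimately show ?thesis by (simp add: f_def)
    qed
    have "gen (FixS ?C ?c \<times> FixS I p) (\<lambda>(a,b). wtS ?C a + wtS I b) = gen (FixS ?S ?p) (wtS ?S)"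
      using gen_bij[OF bij, where wt' = "\<lambda>(a,b). wtS ?C a + wtS I b" and wt = "wtS ?S"] w by blast
    moreover have "gen (FixS ?C ?c \<times> FixS I p) (\<lambda>(a,b). wtS ?C a + wtS I b)
        = gen (FixS ?C ?c) (wtS ?C) * gen (FixS I p) (wtS I)"
      by (rule gen_prod) (use finI in \<open>auto intro: fix_level_finite\<close>)
    ultimately show ?thesis by simp
  qed
  have "detS ?S (Nm ?p) * gen (FixS ?S ?p) (wtS ?S)
      = (detS ?C (Nm ?c) * gen (FixS ?C ?c) (wtS ?C)) * (detS I (Nm p) * gen (FixS I p) (wtS I))"
    unfolding det gsplit by (simp add: algebra_simps)
  also have "\<dots> = 1" using gen_cycle[OF comp.hyps(2)] comp.IH by simp
  finally show ?case .
qed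

lemma perm_det_gen:
  fixes p :: "'a::finite \<Rightarrow> 'a"
  assumes "p permutes UNIV"
  shows "detS UNIV (Nm p) * gen {n. \<forall>i. n (p i) = n i} (\<lambda>n. \<Sum>i\<in>UNIV. n i) = 1"
proof -
  have "cycle_decomp UNIV p" using assms by (simp add: cycle_decomposition)
  then have "detS UNIV (Nm p) * gen (FixS UNIV p) (wtS UNIV) = 1" by (rule gen_decomp)
  moreover have "FixS UNIV p = {n. \<forall>i. n (p i) = n i}" by (simp add: FixS_def)
  ultimately show ?thesis by (simp add: wtS_def[abs_def])
qed


definition Ar :: "int^'n^'m \<Rightarrow> real^'n^'m" where "Ar M = (\<chi> i j. real_of_int (M $ i $ j))"
definition bv :: "int^'n \<Rightarrow> real^'n" where "bv v = (\<chi> i. real_of_int (v $ i))"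

lemma realact_alt: "realact A b g y = (Ar (A g) *v fst y + snd y *\<^sub>R bv (b g), snd y)"
  by (simp add: realact_def Ar_def bv_def)

lemma emb_alt: "emb v = (bv (fst v), real_of_int (snd v))"
  by (simp add: emb_def bv_def)

lemma Ar_mult: "Ar (M ** N) = Ar M ** Ar N"
  by (simp add: Ar_def matrix_matrix_mult_def vec_eq_iff of_int_sum)

lemma bv_mult: "bv (M *v v) = Ar M *v bv v"
  by (simp add: Ar_def bv_def matrix_vector_mult_def vec_eq_iff of_int_sum)

lemma bv_add: "bv (v + w) = bv v + bv w"
  by (simp add: bv_def vec_eq_iff)

lemma bv_inj: "bv v = bv w \<Longrightarrow> v = w"
  by (simp add: bv_def vec_eq_iff)

lemma Ar_one: "Ar (mat 1) = mat 1"
  by (simp add: Ar_def mat_def vec_eq_iff)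

lemma bv_zero: "bv 0 = 0"
  by (simp add: bv_def vec_eq_iff)

lemma emb_inj: "emb v = emb w \<Longrightarrow> v = w"
  by (simp add: emb_alt prod_eq_iff bv_inj)

lemma emb_add: "emb (v + w) = emb v + emb w"
  by (simp add: emb_alt bv_add)

lemma emb_diff: "emb (v - w) = emb v - emb w"
  by (simp add: emb_def vec_eq_iff)

lemma emb_zero: "emb 0 = 0"
  by (simp add: emb_def vec_eq_iff zero_prod_def)

definition zsc :: "int \<Rightarrow> (int^'d) \<times> int \<Rightarrow> (int^'d) \<times> int" where
  "zsc c v = (c *s fst v, c * snd v)"

lemma emb_zsc: "emb (zsc c v) = real_of_int c *\<^sub>R emb v"
  by (simp add: emb_def zsc_def vec_eq_iff)

lemma emb_sum: "finite S \<Longrightarrow> emb (sum f S) = (\<Sum>x\<in>S. emb (f x))"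
  by (induction S rule: finite_induct) (simp_all add: emb_zero emb_add)

lemma matrix_of_latact:
  assumes h: "\<And>v. latact A b g (latact A b h v) = latact A b k v"
  shows "A g ** A h = A k" "A g *v b h + b g = b k"
proof -
  have "A g *v (A h *v x) = A k *v x" for x
    using h[of "(x, 0)"] by (simp add: latact_def)
  then show "A g ** A h = A k" by (simp add: matrix_eq matrix_vector_mul_assoc)
  show "A g *v b h + b g = b k"
    using h[of "(0, 1)"] by (simp add: latact_def)
qed

lemma realact_comp:
  assumes h: "\<And>v. latact A b g (latact A b h v) = latact A b k v"
  shows "realact A b g (realact A b h y) = realact A b k y"
proof -
  note m = matrix_of_latact[OF h]
  have "Ar (A k) = Ar (A g) ** Ar (A h)" using m(1) by (simp add: Ar_mult[symmetric])
  moreover have "bv (b k) = Ar (A g) *v bv (b h) + bv (b g)" using m(2)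
    by (metis bv_add bv_mult)
  ultimately show ?thesis
    by (simp add: realact_alt matrix_vector_mul_assoc algebra_simps)
qed

lemma realact_id:
  assumes h: "\<And>v. latact A b g v = v"
  shows "realact A b g y = y"
proof -
  have "A g *v x = x" for x using h[of "(x, 0)"] by (simp add: latact_def)
  then have "A g = mat 1" by (simp add: matrix_eq)
  moreover have "b g = 0" using h[of "(0, 1)"] by (simp add: latact_def)
  ultimately show ?thesis by (simp add: realact_alt Ar_one bv_zero)
qed

lemma bv_smult: "bv (c *s v) = real_of_int c *\<^sub>R bv v"
  by (simp add: bv_def vec_eq_iff)

lemma realact_emb: "realact A b g (emb v) = emb (latact A b g v)"
  by (simp add: realact_alt emb_alt latact_def bv_add bv_mult bv_smult)

lemma realact_linear: "linear (realact A b g)"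
proof (rule linearI)
  fix x y show "realact A b g (x + y) = realact A b g x + realact A b g y"
    by (simp add: realact_alt algebra_simps)
next
  fix c x show "realact A b g (c *\<^sub>R x) = c *\<^sub>R realact A b g x"
    by (simp add: realact_alt algebra_simps)
qed

lemma card_option_UNIV: "CARD('a::finite option) = Suc CARD('a)"
proof -
  have "card (insert None (range (Some :: 'a \<Rightarrow> 'a option))) = Suc (card (range (Some :: 'a \<Rightarrow> 'a option)))"
    by (rule card_insert_disjoint) auto
  moreover have "card (range (Some :: 'a \<Rightarrow> 'a option)) = CARD('a)"
    by (rule card_image) simp
  ultimately show ?thesis by (simp add: UNIV_option_conv[symmetric])
qed


locale ehrsimp =
  fixes G :: "('g, 'c) monoid_scheme"
    and A :: "'g \<Rightarrow> int^'d^'d" and b :: "'g \<Rightarrow> int^'d"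
    and vs :: "nat \<Rightarrow> (int^'d) \<times> int"
    and P :: "((real^'d) \<times> real) set"
  assumes grp: "group G" and fin: "finite (carrier G)"
    and act_one: "\<And>v. latact A b \<one>\<^bsub>G\<^esub> v = v"
    and act_mult: "\<And>g h v. g \<in> carrier G \<Longrightarrow> h \<in> carrier G \<Longrightarrow>
                     latact A b (g \<otimes>\<^bsub>G\<^esub> h) v = latact A b g (latact A b h v)"
    and vs_height: "\<And>i. i \<le> CARD('d) \<Longrightarrow> snd (vs i) = 1"
    and vs_inj: "inj_on vs {0..CARD('d)}"
    and vs_indep: "\<not> affine_dependent (emb ` vs ` {0..CARD('d)})"
    and P_def: "P = convex hull (emb ` vs ` {0..CARD('d)})"
    and P_inv: "\<And>g. g \<in> carrier G \<Longrightarrow> realact A b g ` P = P"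
begin

definition eK :: "'d option \<Rightarrow> nat" where
  "eK = (SOME e. bij_betw e UNIV {0..CARD('d)})"

lemma eK_bij: "bij_betw eK UNIV {0..CARD('d)}"
proof -
  have "\<exists>e::'d option \<Rightarrow> nat. bij_betw e UNIV {0..CARD('d)}"
    by (rule finite_same_card_bij) (simp_all add: card_option_UNIV)
  then show ?thesis unfolding eK_def by (rule someI_ex)
qed

lemma eK_in: "eK k \<in> {0..CARD('d)}"
  using eK_bij by (auto simp: bij_betw_def)

definition Bk :: "'d option \<Rightarrow> (real^'d) \<times> real" where
  "Bk k = emb (vs (eK k))"

lemma Bk_inj: "inj Bk"
proof (rule injI)
  fix k k' assume "Bk k = Bk k'"
  then have "vs (eK k) = vs (eK k')" unfolding Bk_def by (rule emb_inj)
  then have "eK k = eK k'" using vs_inj eK_in by (meson inj_onD)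
  then show "k = k'" using eK_bij by (auto simp: bij_betw_def inj_on_def)
qed

lemma Bk_img: "Bk ` UNIV = emb ` vs ` {0..CARD('d)}"
proof -
  have "eK ` UNIV = {0..CARD('d)}" using eK_bij by (simp add: bij_betw_def)
  then show ?thesis unfolding Bk_def by (metis image_image)
qed

lemma Bk_snd: "snd (Bk k) = 1"
  using vs_height[of "eK k"] eK_in[of k] by (simp add: Bk_def emb_def)

definition comb :: "('d option \<Rightarrow> real) \<Rightarrow> (real^'d) \<times> real" where
  "comb c = (\<Sum>k\<in>UNIV. c k *\<^sub>R Bk k)"

lemma snd_comb: "snd (comb c) = sum c UNIV"
  by (simp add: comb_def snd_sum Bk_snd)

lemma comb_add: "comb (\<lambda>k. c k + d k) = comb c + comb d"
  by (simp add: comb_def scaleR_add_left sum.distrib)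

lemma comb_diff: "comb (\<lambda>k. c k - d k) = comb c - comb d"
  by (simp add: comb_def scaleR_diff_left sum_subtractf)

lemma comb_scale: "comb (\<lambda>k. r * c k) = r *\<^sub>R comb c"
  by (simp add: comb_def scaleR_sum_right)

lemma sum_Bk_img: "sum f (Bk ` UNIV) = (\<Sum>k\<in>UNIV. f (Bk k))"
  using sum.reindex[OF Bk_inj, of f] by simp

lemma comb_indep:
  assumes "comb c = 0" shows "c k = 0"
proof (rule ccontr)
  assume nz: "c k \<noteq> 0"
  let ?T = "Bk ` UNIV"
  define U where "U = (\<lambda>v. c (Hilbert_Choice.inv Bk v))"
  have U: "U (Bk j) = c j" for j by (simp add: U_def inv_f_f[OF Bk_inj])
  have "sum U ?T = 0"
    using assms snd_comb[of c] by (simp add: sum_Bk_img U)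
  moreover have "sum (\<lambda>v. U v *\<^sub>R v) ?T = 0"
    using assms by (simp add: sum_Bk_img U comb_def)
  moreover have "\<exists>v\<in>?T. U v \<noteq> 0" by (intro bexI[of _ "Bk k"]) (simp_all add: U nz)
  ultimately have "affine_dependent ?T"
    by (subst affine_dependent_explicit_finite) auto
  then show False using vs_indep by (simp add: Bk_img)
qed

lemma comb_uniq:
  assumes "comb c = comb d" shows "c = d"
proof
  fix k
  have "comb (\<lambda>k. c k - d k) = 0" using assms by (simp add: comb_diff)
  then show "c k = d k" using comb_indep by fastforce
qed

lemma P_comb: "P = {y. \<exists>c. (\<forall>k. 0 \<le> c k) \<and> sum c UNIV = 1 \<and> y = comb c}"
proof -
  have "P = convex hull (Bk ` UNIV)" by (simp add: P_def Bk_img)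
  also have "\<dots> = {y. \<exists>u. (\<forall>x\<in>Bk ` UNIV. 0 \<le> u x) \<and> sum u (Bk ` UNIV) = 1 \<and> sum (\<lambda>x. u x *\<^sub>R x) (Bk ` UNIV) = y}"
    by (rule convex_hull_finite) simp
  also have "\<dots> = {y. \<exists>c. (\<forall>k. 0 \<le> c k) \<and> sum c UNIV = 1 \<and> y = comb c}"
  proof (intro Collect_cong iffI)
    fix y assume "\<exists>u. (\<forall>x\<in>Bk ` UNIV. 0 \<le> u x) \<and> sum u (Bk ` UNIV) = 1 \<and> sum (\<lambda>x. u x *\<^sub>R x) (Bk ` UNIV) = y"
    then obtain u where u: "\<forall>x\<in>Bk ` UNIV. 0 \<le> u x" "sum u (Bk ` UNIV) = 1" "sum (\<lambda>x. u x *\<^sub>R x) (Bk ` UNIV) = y"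
      by blast
    show "\<exists>c. (\<forall>k. 0 \<le> c k) \<and> sum c UNIV = 1 \<and> y = comb c"
      by (rule exI[of _ "\<lambda>k. u (Bk k)"]) (use u in \<open>auto simp: sum_Bk_img comb_def\<close>)
  next
    fix y assume "\<exists>c. (\<forall>k. 0 \<le> c k) \<and> sum c UNIV = 1 \<and> y = comb c"
    then obtain c where c: "\<forall>k. 0 \<le> c k" "sum c UNIV = 1" "y = comb c" by blast
    have U: "c (Hilbert_Choice.inv Bk (Bk j)) = c j" for j by (simp add: inv_f_f[OF Bk_inj])
    show "\<exists>u. (\<forall>x\<in>Bk ` UNIV. 0 \<le> u x) \<and> sum u (Bk ` UNIV) = 1 \<and> sum (\<lambda>x. u x *\<^sub>R x) (Bk ` UNIV) = y"
      by (rule exI[of _ "\<lambda>v. c (Hilbert_Choice.inv Bk v)"]) (use c in \<open>auto simp: sum_Bk_img comb_def U\<close>)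
  qed
  finally show ?thesis .
qed

lemma Bk_in_P: "Bk k \<in> P"
proof -
  have e: "(\<lambda>j. (if j = k then 1 else 0) *\<^sub>R Bk j) = (\<lambda>j. if j = k then Bk j else 0)" by auto
  have "Bk k = comb (\<lambda>j. if j = k then 1 else 0)"
    unfolding comb_def e by simp
  then show ?thesis unfolding P_comb by (intro CollectI exI[of _ "\<lambda>j. if j = k then 1 else 0"]) auto
qed

lemma mP_comb: "(\<lambda>y. real m *\<^sub>R y) ` P = {y. \<exists>c. (\<forall>k. 0 \<le> c k) \<and> sum c UNIV = real m \<and> y = comb c}"
proof
  show "(\<lambda>y. real m *\<^sub>R y) ` P \<subseteq> {y. \<exists>c. (\<forall>k. 0 \<le> c k) \<and> sum c UNIV = real m \<and> y = comb c}"
  proof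
    fix y assume "y \<in> (\<lambda>y. real m *\<^sub>R y) ` P"
    then obtain c where c: "\<forall>k. 0 \<le> c k" "sum c UNIV = 1" "y = real m *\<^sub>R comb c"
      unfolding P_comb by blast
    show "y \<in> {y. \<exists>c. (\<forall>k. 0 \<le> c k) \<and> sum c UNIV = real m \<and> y = comb c}"
      using c by (intro CollectI exI[of _ "\<lambda>k. real m * c k"])
        (simp add: comb_scale sum_distrib_left[symmetric])
  qed
  show "{y. \<exists>c. (\<forall>k. 0 \<le> c k) \<and> sum c UNIV = real m \<and> y = comb c} \<subseteq> (\<lambda>y. real m *\<^sub>R y) ` P"
  proof
    fix y assume "y \<in> {y. \<exists>c. (\<forall>k. 0 \<le> c k) \<and> sum c UNIV = real m \<and> y = comb c}"
    then obtain c where c: "\<forall>k. 0 \<le> c k" "sum c UNIV = real m" "y = comb c" by blast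
    show "y \<in> (\<lambda>y. real m *\<^sub>R y) ` P"
    proof (cases "m = 0")
      case True
      then have "\<forall>k. c k = 0" using c sum_nonneg_eq_0_iff[of UNIV c] by simp
      then have "y = 0" using c by (simp add: comb_def)
      then show ?thesis using True Bk_in_P by (intro image_eqI[of _ _ "Bk None"]) auto
    next
      case False
      have "y = real m *\<^sub>R comb (\<lambda>k. c k / real m)"
        using False c by (simp add: comb_scale[symmetric])
      moreover have "comb (\<lambda>k. c k / real m) \<in> P"
        unfolding P_comb using c False by (intro CollectI exI[of _ "\<lambda>k. c k / real m"])
          (simp add: sum_divide_distrib[symmetric])
      ultimately show ?thesis by blast
    qed
  qed
qed

lemma latpts_iff: "v \<in> latpts m P \<longleftrightarrow> (\<exists>c. (\<forall>k. 0 \<le> c k) \<and> sum c UNIV = real m \<and> emb v = comb c)"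
  by (simp add: latpts_def mP_comb)

lemma BOX_iff: "v \<in> BOX CARD('d) vs \<longleftrightarrow> (\<exists>a. (\<forall>k. 0 \<le> a k \<and> a k < 1) \<and> emb v = comb a)"
proof -
  have bij: "bij_betw eK UNIV {..CARD('d)}" using eK_bij by (simp add: atLeast0AtMost)
  have re: "(\<Sum>i\<le>CARD('d). f i) = (\<Sum>k\<in>UNIV. f (eK k))" for f :: "nat \<Rightarrow> (real^'d) \<times> real"
    using sum.reindex_bij_betw[OF bij, of f] by simp
  have ei: "inv_into UNIV eK (eK k) = k" for k
    using bij by (simp add: bij_betw_inv_into_left)
  show ?thesis
  proof
    assume "v \<in> BOX CARD('d) vs"
    then obtain a where a: "\<forall>i\<le>CARD('d). 0 \<le> a i \<and> a i < 1" "emb v = (\<Sum>i\<le>CARD('d). a i *\<^sub>R emb (vs i))"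
      unfolding BOX_def by blast
    have "emb v = comb (\<lambda>k. a (eK k))" unfolding a(2) re comb_def Bk_def ..
    moreover have "\<forall>k. 0 \<le> a (eK k) \<and> a (eK k) < 1" using a(1) eK_in by simp
    ultimately show "\<exists>a. (\<forall>k. 0 \<le> a k \<and> a k < 1) \<and> emb v = comb a"
      by (intro exI[of _ "\<lambda>k. a (eK k)"] conjI)
  next
    assume "\<exists>a. (\<forall>k. 0 \<le> a k \<and> a k < 1) \<and> emb v = comb a"
    then obtain a where a: "\<forall>k. 0 \<le> a k \<and> a k < 1" "emb v = comb a" by blast
    define a' where "a' = (\<lambda>i. a (inv_into UNIV eK i))"
    have "(\<Sum>i\<le>CARD('d). a' i *\<^sub>R emb (vs i)) = comb a"
      unfolding re comb_def Bk_def a'_def ei ..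
    moreover have "\<forall>i\<le>CARD('d). 0 \<le> a' i \<and> a' i < 1" using a(1) by (simp add: a'_def)
    ultimately show "v \<in> BOX CARD('d) vs" using a(2) unfolding BOX_def mem_Collect_eq
      by (intro exI[of _ a'] conjI) auto
  qed
qed

lemma bounded_lat_finite: "finite {v :: (int^'d) \<times> int. (\<forall>i. \<bar>fst v $ i\<bar> \<le> M) \<and> \<bar>snd v\<bar> \<le> M}"
proof (rule finite_subset)
  show "{v :: (int^'d) \<times> int. (\<forall>i. \<bar>fst v $ i\<bar> \<le> M) \<and> \<bar>snd v\<bar> \<le> M}
      \<subseteq> (\<lambda>(f, t). (vec_lambda f, t)) ` ((PiE UNIV (\<lambda>_. {-M..M})) \<times> {-M..M})"
  proof
    fix v :: "(int^'d) \<times> int" assume v: "v \<in> {v. (\<forall>i. \<bar>fst v $ i\<bar> \<le> M) \<and> \<bar>snd v\<bar> \<le> M}"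
    have "v = (\<lambda>(f, t). (vec_lambda f, t)) (vec_nth (fst v), snd v)" by simp
    moreover have "(vec_nth (fst v), snd v) \<in> (PiE UNIV (\<lambda>_. {-M..M})) \<times> {-M..M}"
    proof -
      have "fst v $ i \<in> {-M..M}" for i
      proof -
        have "\<bar>fst v $ i\<bar> \<le> M" using v by blast
        then show ?thesis by (auto simp: abs_le_iff)
      qed
      moreover have "snd v \<in> {-M..M}"
      proof -
        have "\<bar>snd v\<bar> \<le> M" using v by blast
        then show ?thesis by (auto simp: abs_le_iff)
      qed
      ultimately show ?thesis by (simp add: PiE_iff)
    qed
    ultimately show "v \<in> (\<lambda>(f, t). (vec_lambda f, t)) ` ((PiE UNIV (\<lambda>_. {-M..M})) \<times> {-M..M})"
      by blast
  qed
  show "finite ((\<lambda>(f, t). (vec_lambda f, t)) ` ((PiE UNIV (\<lambda>_. {-M..M})) \<times> {-M..M}))"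
    by (intro finite_imageI finite_cartesian_product finite_PiE) auto
qed

lemma comb_finite: "finite {v. \<exists>c. (\<forall>k. 0 \<le> c k \<and> c k \<le> r) \<and> emb v = comb c}"
proof -
  define R where "R = r * (\<Sum>k\<in>UNIV. norm (Bk k))"
  have nb: "norm (emb v) \<le> R" if "\<forall>k. 0 \<le> c k \<and> c k \<le> r" "emb v = comb c" for v c
  proof -
    have "norm (comb c) \<le> (\<Sum>k\<in>UNIV. norm (c k *\<^sub>R Bk k))" unfolding comb_def by (rule norm_sum)
    also have "\<dots> \<le> (\<Sum>k\<in>UNIV. r * norm (Bk k))"
      using that(1) by (intro sum_mono) (simp add: mult_right_mono)
    finally show ?thesis using that(2) by (simp add: R_def sum_distrib_left)
  qed
  have "{v. \<exists>c. (\<forall>k. 0 \<le> c k \<and> c k \<le> r) \<and> emb v = comb c}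
      \<subseteq> {v :: (int^'d) \<times> int. (\<forall>i. \<bar>fst v $ i\<bar> \<le> ceiling R) \<and> \<bar>snd v\<bar> \<le> ceiling R}"
  proof
    fix v assume "v \<in> {v. \<exists>c. (\<forall>k. 0 \<le> c k \<and> c k \<le> r) \<and> emb v = comb c}"
    then have n: "norm (emb v) \<le> R" using nb by blast
    have "\<bar>real_of_int (fst v $ i)\<bar> \<le> R" for i
    proof -
      have "\<bar>real_of_int (fst v $ i)\<bar> = \<bar>fst (emb v) $ i\<bar>" by (simp add: emb_def)
      also have "\<dots> \<le> norm (fst (emb v))" by (rule component_le_norm_cart)
      also have "\<dots> \<le> norm (emb v)" by (metis norm_fst_le prod.collapse)
      finally show ?thesis using n by simp
    qed
    moreover have "\<bar>real_of_int (snd v)\<bar> \<le> R"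
    proof -
      have "\<bar>real_of_int (snd v)\<bar> = norm (snd (emb v))" by (simp add: emb_def)
      also have "\<dots> \<le> norm (emb v)" by (metis norm_snd_le prod.collapse)
      finally show ?thesis using n by simp
    qed
    moreover have ce: "\<bar>z\<bar> \<le> ceiling R" if "\<bar>real_of_int z\<bar> \<le> R" for z
      by (metis ceiling_mono ceiling_of_int of_int_abs that)
    ultimately show "v \<in> {v :: (int^'d) \<times> int. (\<forall>i. \<bar>fst v $ i\<bar> \<le> ceiling R) \<and> \<bar>snd v\<bar> \<le> ceiling R}"
      by blast
  qed
  then show ?thesis using bounded_lat_finite finite_subset by blast
qed

lemma BOX_finite: "finite (BOX CARD('d) vs)"
proof (rule finite_subset[OF _ comb_finite[of 1]])
  show "BOX CARD('d) vs \<subseteq> {v. \<exists>c. (\<forall>k. 0 \<le> c k \<and> c k \<le> 1) \<and> emb v = comb c}"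
  proof
    fix v assume "v \<in> BOX CARD('d) vs"
    then obtain a where a: "\<forall>k. 0 \<le> a k \<and> a k < 1" "emb v = comb a" by (auto simp: BOX_iff)
    then have "\<forall>k. 0 \<le> a k \<and> a k \<le> 1" by (simp add: less_imp_le)
    then show "v \<in> {v. \<exists>c. (\<forall>k. 0 \<le> c k \<and> c k \<le> 1) \<and> emb v = comb c}" using a(2) by blast
  qed
qed

lemma latpts_finite: "finite (latpts m P)"
proof (rule finite_subset[OF _ comb_finite[of "real m"]])
  show "latpts m P \<subseteq> {v. \<exists>c. (\<forall>k. 0 \<le> c k \<and> c k \<le> real m) \<and> emb v = comb c}"
  proof
    fix v assume "v \<in> latpts m P"
    then obtain c where c: "\<forall>k. 0 \<le> c k" "sum c UNIV = real m" "emb v = comb c"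
      by (auto simp: latpts_iff)
    have "c k \<le> real m" for k
      using c member_le_sum[of k UNIV c] by auto
    then show "v \<in> {v. \<exists>c. (\<forall>k. 0 \<le> c k \<and> c k \<le> real m) \<and> emb v = comb c}" using c by blast
  qed
qed

end


context ehrsimp begin

lemma realact_inv:
  assumes g: "g \<in> carrier G"
  shows "realact A b (inv\<^bsub>G\<^esub> g) (realact A b g y) = y"
proof -
  have ig: "inv\<^bsub>G\<^esub> g \<in> carrier G" using g by (rule group.inv_closed[OF grp])
  have "latact A b (inv\<^bsub>G\<^esub> g) (latact A b g v) = latact A b \<one>\<^bsub>G\<^esub> v" for v
    using act_mult[OF ig g, of v] group.l_inv[OF grp g] by simp
  then have "realact A b (inv\<^bsub>G\<^esub> g) (realact A b g y) = realact A b \<one>\<^bsub>G\<^esub> y"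
    by (rule realact_comp)
  also have "\<dots> = y" by (rule realact_id[OF act_one])
  finally show ?thesis .
qed

lemma realact_inj: "g \<in> carrier G \<Longrightarrow> inj (realact A b g)"
  by (metis injI realact_inv)

lemma ext_Bk: "x extreme_point_of P \<longleftrightarrow> x \<in> range Bk"
  using extreme_point_of_convex_hull_affine_independent[OF vs_indep] by (simp add: P_def Bk_img)

lemma extreme_img:
  assumes g: "g \<in> carrier G" and x: "x extreme_point_of P"
  shows "realact A b g x extreme_point_of P"
proof -
  let ?f = "realact A b g"
  have lin: "linear ?f" by (rule realact_linear)
  have inj: "inj ?f" using g by (rule realact_inj)
  have fP: "?f ` P = P" using g by (rule P_inv)
  have xP: "x \<in> P" using x by (simp add: extreme_point_of_def)
  show ?thesis unfolding extreme_point_of_def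
  proof (intro conjI ballI)
    show "?f x \<in> P" using xP fP by blast
    fix a' b' assume a': "a' \<in> P" and b': "b' \<in> P"
    obtain a where a: "a \<in> P" "a' = ?f a" using a' fP by (metis imageE)
    obtain c where c: "c \<in> P" "b' = ?f c" using b' fP by (metis imageE)
    show "?f x \<notin> open_segment a' b'"
    proof
      assume "?f x \<in> open_segment a' b'"
      then have "?f x \<in> ?f ` open_segment a c" using a c open_segment_linear_image[OF lin inj] by simp
      then obtain z where z: "z \<in> open_segment a c" "?f x = ?f z" by blast
      then have "x = z" using inj by (simp add: inj_eq)
      then show False using x z a c by (simp add: extreme_point_of_def)
    qed
  qed
qed

definition sig :: "'g \<Rightarrow> 'd option \<Rightarrow> 'd option" where
  "sig g k = (THE j. Bk j = realact A b g (Bk k))"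

lemma sig_Bk:
  assumes g: "g \<in> carrier G" shows "Bk (sig g k) = realact A b g (Bk k)"
proof -
  have "Bk k extreme_point_of P" by (simp add: ext_Bk)
  then have "realact A b g (Bk k) extreme_point_of P" by (rule extreme_img[OF g])
  then obtain j where j: "realact A b g (Bk k) = Bk j" by (auto simp: ext_Bk)
  have "\<exists>!j. Bk j = realact A b g (Bk k)"
    using j Bk_inj by (metis injD)
  then show ?thesis unfolding sig_def by (rule theI')
qed

lemma sig_perm:
  assumes g: "g \<in> carrier G" shows "sig g permutes UNIV"
proof (rule inj_imp_permutes)
  show "inj_on (sig g) UNIV"
  proof (rule inj_onI)
    fix x y assume "sig g x = sig g y"
    then have "realact A b g (Bk x) = realact A b g (Bk y)" using sig_Bk[OF g] by metis
    then have "Bk x = Bk y" using realact_inj[OF g] by (simp add: inj_eq)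
    then show "x = y" using Bk_inj by (simp add: inj_eq)
  qed
qed auto

lemma realact_comb:
  assumes g: "g \<in> carrier G"
  shows "realact A b g (comb c) = comb (\<lambda>k. c (Hilbert_Choice.inv (sig g) k))"
proof -
  have bs: "bij (sig g)" using sig_perm[OF g] by (simp add: permutes_bij)
  have "realact A b g (comb c) = (\<Sum>k\<in>UNIV. c k *\<^sub>R realact A b g (Bk k))"
    unfolding comb_def using realact_linear[of A b g]
    by (simp add: linear_sum linear_scale)
  also have "\<dots> = (\<Sum>k\<in>UNIV. c k *\<^sub>R Bk (sig g k))" by (simp add: sig_Bk[OF g])
  also have "\<dots> = (\<Sum>k\<in>UNIV. (\<lambda>j. c (Hilbert_Choice.inv (sig g) j) *\<^sub>R Bk j) (sig g k))"
    using bs by (simp add: bij_is_inj inv_f_f)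
  also have "\<dots> = (\<Sum>j\<in>UNIV. c (Hilbert_Choice.inv (sig g) j) *\<^sub>R Bk j)"
    by (rule sum.reindex_bij_betw[OF bs])
  finally show ?thesis by (simp add: comb_def)
qed

lemma fixed_comb:
  assumes g: "g \<in> carrier G"
  shows "realact A b g (comb c) = comb c \<longleftrightarrow> (\<forall>k. c (sig g k) = c k)"
proof -
  have bs: "bij (sig g)" using sig_perm[OF g] by (simp add: permutes_bij)
  have "realact A b g (comb c) = comb c \<longleftrightarrow> (\<lambda>k. c (Hilbert_Choice.inv (sig g) k)) = c"
    using comb_uniq by (auto simp: realact_comb[OF g])
  also have "\<dots> \<longleftrightarrow> (\<forall>k. c (sig g k) = c k)"
  proof
    assume h: "(\<lambda>k. c (Hilbert_Choice.inv (sig g) k)) = c"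
    show "\<forall>k. c (sig g k) = c k"
    proof
      fix k
      have "c (Hilbert_Choice.inv (sig g) (sig g k)) = c (sig g k)" using h by metis
      then show "c (sig g k) = c k" using bs by (simp add: bij_is_inj inv_f_f)
    qed
  next
    assume h: "\<forall>k. c (sig g k) = c k"
    show "(\<lambda>k. c (Hilbert_Choice.inv (sig g) k)) = c"
    proof
      fix k
      have "c (sig g (Hilbert_Choice.inv (sig g) k)) = c (Hilbert_Choice.inv (sig g) k)" using h by blast
      then show "c (Hilbert_Choice.inv (sig g) k) = c k" using bs by (simp add: bij_is_surj surj_f_inv_f)
    qed
  qed
  finally show ?thesis .
qed

lemma latact_fixed_iff: "latact A b g v = v \<longleftrightarrow> realact A b g (emb v) = emb v"
  by (metis emb_inj realact_emb)

definition LPg :: "nat \<Rightarrow> 'g \<Rightarrow> ((int^'d) \<times> int) set" where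
  "LPg m g = {v \<in> latpts m P. latact A b g v = v}"

definition BoxFix :: "'g \<Rightarrow> ((int^'d) \<times> int) set" where
  "BoxFix g = {w \<in> BOX CARD('d) vs. latact A b g w = w}"

definition FixN :: "'g \<Rightarrow> ('d option \<Rightarrow> nat) set" where
  "FixN g = {nn. \<forall>k. nn (sig g k) = nn k}"

definition Phi :: "((int^'d) \<times> int) \<times> ('d option \<Rightarrow> nat) \<Rightarrow> (int^'d) \<times> int" where
  "Phi x = fst x + (\<Sum>k\<in>UNIV. zsc (int (snd x k)) (vs (eK k)))"

lemma emb_lat_comb: "emb (\<Sum>k\<in>UNIV. zsc (int (nn k)) (vs (eK k))) = comb (\<lambda>k. real (nn k))"
  by (simp add: emb_sum emb_zsc comb_def Bk_def)

lemma emb_Phi: "emb (Phi (w, nn)) = emb w + comb (\<lambda>k. real (nn k))"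
  by (simp add: Phi_def emb_add emb_lat_comb)

lemma box_snd:
  assumes "\<forall>k. 0 \<le> a k \<and> a k < 1" "emb w = comb a"
  shows "real_of_int (snd w) = sum a UNIV" "snd w \<ge> 0"
proof -
  have "real_of_int (snd w) = snd (emb w)" by (simp add: emb_def)
  also have "\<dots> = sum a UNIV" using assms(2) by (simp add: snd_comb)
  finally show "real_of_int (snd w) = sum a UNIV" .
  moreover have "sum a UNIV \<ge> 0" using assms(1) by (simp add: sum_nonneg)
  ultimately show "snd w \<ge> 0" by simp
qed

lemma floor_uniq:
  fixes a a' :: real and n n' :: nat
  assumes "0 \<le> a" "a < 1" "0 \<le> a'" "a' < 1" "a + real n = a' + real n'"
  shows "n = n'"
proof -
  have "real n < real (Suc n')" using assms by simp
  then have "n < Suc n'" by (simp only: of_nat_less_iff)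
  moreover have "real n' < real (Suc n)" using assms by simp
  then have "n' < Suc n" by (simp only: of_nat_less_iff)
  ultimately show ?thesis by simp
qed

lemma nat_lev: "0 \<le> (z::int) \<Longrightarrow> z = int m - int s \<Longrightarrow> nat z + s = m"
  by presburger

lemma count_bij:
  assumes g: "g \<in> carrier G"
  shows "bij_betw Phi {x \<in> BoxFix g \<times> FixN g. (\<lambda>(w, nn). nat (snd w) + sum nn UNIV) x = m} (LPg m g)"
proof (rule bij_betw_imageI)
  let ?S = "{x \<in> BoxFix g \<times> FixN g. (\<lambda>(w, nn). nat (snd w) + sum nn UNIV) x = m}"
  show "inj_on Phi ?S"
  proof (rule inj_onI)
    fix x y assume x: "x \<in> ?S" and y: "y \<in> ?S" and e: "Phi x = Phi y"
    obtain w nn where xw: "x = (w, nn)" by (cases x)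
    obtain w' nn' where yw: "y = (w', nn')" by (cases y)
    obtain a where a: "\<forall>k. 0 \<le> a k \<and> a k < 1" "emb w = comb a"
      using x xw by (auto simp: BoxFix_def BOX_iff)
    obtain a' where a': "\<forall>k. 0 \<le> a' k \<and> a' k < 1" "emb w' = comb a'"
      using y yw by (auto simp: BoxFix_def BOX_iff)
    have "emb (Phi (w, nn)) = emb (Phi (w', nn'))" using e xw yw by simp
    then have "comb (\<lambda>k. a k + real (nn k)) = comb (\<lambda>k. a' k + real (nn' k))"
      by (simp add: emb_Phi a a' comb_add)
    then have ce: "(\<lambda>k. a k + real (nn k)) = (\<lambda>k. a' k + real (nn' k))" by (rule comb_uniq)
    have nn: "nn = nn'"
    proof
      fix k
      have "a k + real (nn k) = a' k + real (nn' k)" using ce by metis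
      then show "nn k = nn' k" using a(1) a'(1) floor_uniq by blast
    qed
    then have "emb w = emb w'" using \<open>emb (Phi (w, nn)) = emb (Phi (w', nn'))\<close> by (simp add: emb_Phi)
    then have "w = w'" by (rule emb_inj)
    then show "x = y" using xw yw nn by simp
  qed
  show "Phi ` ?S = LPg m g"
  proof
    show "Phi ` ?S \<subseteq> LPg m g"
    proof
      fix v assume "v \<in> Phi ` ?S"
      then obtain w nn where x: "(w, nn) \<in> ?S" and v: "v = Phi (w, nn)" by auto
      then have wB: "w \<in> BOX CARD('d) vs" and wf: "latact A b g w = w" and nf: "\<forall>k. nn (sig g k) = nn k"
        and lev: "nat (snd w) + sum nn UNIV = m"
        by (auto simp: BoxFix_def FixN_def)
      obtain a where a: "\<forall>k. 0 \<le> a k \<and> a k < 1" "emb w = comb a" using wB by (auto simp: BOX_iff)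
      have af: "\<forall>k. a (sig g k) = a k" using wf a(2) by (simp add: latact_fixed_iff fixed_comb[OF g])
      have ev: "emb v = comb (\<lambda>k. a k + real (nn k))" using v by (simp add: emb_Phi a comb_add)
      have "sum (\<lambda>k. a k + real (nn k)) UNIV = real m"
      proof -
        have "sum (\<lambda>k. a k + real (nn k)) UNIV = real_of_int (snd w) + real (sum nn UNIV)"
          using box_snd(1)[OF a] by (simp add: sum.distrib)
        also have "real_of_int (snd w) = real (nat (snd w))" using box_snd(2)[OF a] by simp
        finally show ?thesis using lev by (metis of_nat_add)
      qed
      moreover have "\<forall>k. 0 \<le> a k + real (nn k)" using a(1) by (simp add: add_nonneg_nonneg)
      ultimately have "v \<in> latpts m P" using ev by (auto simp: latpts_iff)
      moreover have "latact A b g v = v"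
        using ev af nf by (simp add: latact_fixed_iff fixed_comb[OF g])
      ultimately show "v \<in> LPg m g" by (simp add: LPg_def)
    qed
    show "LPg m g \<subseteq> Phi ` ?S"
    proof
      fix v assume v: "v \<in> LPg m g"
      then obtain c where c: "\<forall>k. 0 \<le> c k" "sum c UNIV = real m" "emb v = comb c"
        by (auto simp: LPg_def latpts_iff)
      have cf: "\<forall>k. c (sig g k) = c k"
        using v c(3) by (simp add: LPg_def latact_fixed_iff fixed_comb[OF g])
      define nn where "nn = (\<lambda>k. nat (floor (c k)))"
      define a where "a = (\<lambda>k. c k - real (nn k))"
      have nnr: "real (nn k) = of_int (floor (c k))" for k
        using c(1) by (simp add: nn_def)
      have a01: "\<forall>k. 0 \<le> a k \<and> a k < 1"
      proof
        fix k
        have h1: "real_of_int (floor (c k)) \<le> c k" by (rule of_int_floor_le)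
        have h2: "c k < real_of_int (floor (c k)) + 1" by (rule real_of_int_floor_add_one_gt)
        show "0 \<le> a k \<and> a k < 1"
          unfolding a_def using nnr[of k] h1 h2 by linarith
      qed
      define w where "w = v - (\<Sum>k\<in>UNIV. zsc (int (nn k)) (vs (eK k)))"
      have ew: "emb w = comb a"
        by (simp add: w_def emb_diff emb_lat_comb c(3) a_def comb_diff)
      have vP: "v = Phi (w, nn)" by (simp add: Phi_def w_def)
      have wB: "w \<in> BOX CARD('d) vs" using a01 ew by (auto simp: BOX_iff)
      have nf: "\<forall>k. nn (sig g k) = nn k" using cf by (simp add: nn_def)
      have af: "\<forall>k. a (sig g k) = a k" using cf nf by (simp add: a_def)
      have wf: "latact A b g w = w" using ew af by (simp add: latact_fixed_iff fixed_comb[OF g])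
      have "real_of_int (snd w) = sum a UNIV" by (rule box_snd(1)[OF a01 ew])
      also have "\<dots> = real m - real (sum nn UNIV)" by (simp add: a_def sum_subtractf c(2))
      finally have sw: "real_of_int (snd w) = real_of_int (int m - int (sum nn UNIV))" by simp
      then have sw2: "snd w = int m - int (sum nn UNIV)" by (simp only: of_int_eq_iff)
      have "snd w \<ge> 0" by (rule box_snd(2)[OF a01 ew])
      then have lev: "nat (snd w) + sum nn UNIV = m" using sw2 nat_lev by blast
      have "(w, nn) \<in> ?S" using wB wf nf lev by (simp add: BoxFix_def FixN_def)
      then show "v \<in> Phi ` ?S" using vP by blast
    qed
  qed
qed

end


definition hc :: "real \<Rightarrow> complex fps" where "hc r = fps_const (complex_of_real r)"

lemma hc_add: "hc (x + y) = hc x + hc y" by (simp add: hc_def)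
lemma hc_mult: "hc (x * y) = hc x * hc y" by (simp add: hc_def)
lemma hc_0: "hc 0 = 0" by (simp add: hc_def)
lemma hc_1: "hc 1 = 1" by (simp add: hc_def)
lemma hc_sum: "finite S \<Longrightarrow> hc (sum f S) = (\<Sum>x\<in>S. hc (f x))"
  by (induction S rule: finite_induct) (simp_all add: hc_0 hc_add)

definition mapm :: "real^'n^'m \<Rightarrow> complex fps^'n^'m" where
  "mapm M = (\<chi> i j. hc (M $ i $ j))"

lemma mapm_mult: "mapm (M ** N) = mapm M ** mapm N"
  by (simp add: mapm_def matrix_matrix_mult_def vec_eq_iff hc_sum hc_mult)

lemma mapm_one: "mapm (mat 1) = mat 1"
  by (simp add: mapm_def mat_def vec_eq_iff hc_0 hc_1)

lemma IX_left:
  fixes M B :: "'a::comm_ring_1^'n^'n"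
  shows "((\<chi> i j. (if i = j then 1 else 0) - x * M $ i $ j) ** B) $ i $ k = B $ i $ k - x * (M ** B) $ i $ k"
proof -
  have "((\<chi> i j. (if i = j then 1 else 0) - x * M $ i $ j) ** B) $ i $ k
      = (\<Sum>j\<in>UNIV. (if i = j then 1 else 0) * B $ j $ k) - x * (\<Sum>j\<in>UNIV. M $ i $ j * B $ j $ k)"
    by (simp add: matrix_matrix_mult_def left_diff_distrib sum_subtractf sum_distrib_left algebra_simps)
  also have "(\<Sum>j\<in>UNIV. (if i = j then 1 else 0) * B $ j $ k) = B $ i $ k"
  proof -
    have e: "(\<lambda>j. (if i = j then 1 else 0) * B $ j $ k) = (\<lambda>j. if i = j then B $ j $ k else 0)" by auto
    show ?thesis unfolding e by simp
  qed
  finally show ?thesis by (simp add: matrix_matrix_mult_def)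
qed

lemma IX_right:
  fixes M B :: "'a::comm_ring_1^'n^'n"
  shows "(B ** (\<chi> i j. (if i = j then 1 else 0) - x * M $ i $ j)) $ i $ k = B $ i $ k - x * (B ** M) $ i $ k"
proof -
  have "(B ** (\<chi> i j. (if i = j then 1 else 0) - x * M $ i $ j)) $ i $ k
      = (\<Sum>j\<in>UNIV. B $ i $ j * (if j = k then 1 else 0)) - x * (\<Sum>j\<in>UNIV. B $ i $ j * M $ j $ k)"
    by (simp add: matrix_matrix_mult_def right_diff_distrib sum_subtractf sum_distrib_left algebra_simps)
  also have "(\<Sum>j\<in>UNIV. B $ i $ j * (if j = k then 1 else 0)) = B $ i $ k"
    by (simp add: if_distrib cong: if_cong)
  finally show ?thesis by (simp add: matrix_matrix_mult_def)
qed

lemma sum_option_UNIV: "(\<Sum>k\<in>(UNIV::'a::finite option set). f k) = f None + (\<Sum>i\<in>UNIV. f (Some i))"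
proof -
  have "(\<Sum>k\<in>(UNIV::'a option set). f k) = (\<Sum>k\<in>insert None (range Some). f k)"
    by (simp add: UNIV_option_conv[symmetric])
  also have "\<dots> = f None + sum f (range Some)" by (rule sum.insert) auto
  also have "sum f (range Some) = (\<Sum>i\<in>UNIV. f (Some i))" by (simp add: sum.reindex)
  finally show ?thesis .
qed

context ehrsimp begin

definition J :: "(real^'d) \<times> real \<Rightarrow> real^('d option)" where
  "J y = (\<chi> k. case k of None \<Rightarrow> snd y | Some i \<Rightarrow> fst y $ i)"

lemma J_linear: "linear J"
  by (rule linearI) (simp_all add: J_def vec_eq_iff split: option.splits)

lemma J_zero: "J y = 0 \<Longrightarrow> y = 0"
proof -
  assume h: "J y = 0"
  have "snd y = 0" using h[THEN arg_cong[where f = "\<lambda>v. v $ None"]] by (simp add: J_def)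
  moreover have "fst y = 0"
  proof (rule vec_eq_iff[THEN iffD2], rule allI)
    fix i show "fst y $ i = 0 $ i" using h[THEN arg_cong[where f = "\<lambda>v. v $ Some i"]] by (simp add: J_def)
  qed
  ultimately show "y = 0" by (simp add: prod_eq_iff)
qed

definition Mr :: "'g \<Rightarrow> real^('d option)^('d option)" where
  "Mr g = (\<chi> i j. case i of None \<Rightarrow> (if j = None then 1 else 0)
      | Some i' \<Rightarrow> (case j of None \<Rightarrow> real_of_int (b g $ i') | Some j' \<Rightarrow> real_of_int (A g $ i' $ j')))"

lemma Mr_J: "Mr g *v J y = J (realact A b g y)"
proof (rule vec_eq_iff[THEN iffD2], rule allI)
  fix k
  show "(Mr g *v J y) $ k = J (realact A b g y) $ k"
  proof (cases k)
    case None
    then show ?thesis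
      by (simp add: matrix_vector_mult_def sum_option_UNIV Mr_def J_def realact_def)
  next
    case (Some i)
    then show ?thesis
      by (simp add: matrix_vector_mult_def sum_option_UNIV Mr_def J_def realact_def algebra_simps)
  qed
qed

definition Sr :: "real^('d option)^('d option)" where
  "Sr = (\<chi> i k. J (Bk k) $ i)"

definition Pr :: "'g \<Rightarrow> real^('d option)^('d option)" where
  "Pr g = (\<chi> j k. if j = sig g k then 1 else 0)"

lemma Mr_Sr:
  assumes g: "g \<in> carrier G" shows "Mr g ** Sr = Sr ** Pr g"
proof (rule vec_eq_iff[THEN iffD2], rule allI, rule vec_eq_iff[THEN iffD2], rule allI)
  fix i k
  have "(Mr g ** Sr) $ i $ k = (Mr g *v J (Bk k)) $ i"
    by (simp add: matrix_matrix_mult_def matrix_vector_mult_def Sr_def)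
  also have "\<dots> = J (Bk (sig g k)) $ i" by (simp add: Mr_J sig_Bk[OF g])
  also have "\<dots> = (Sr ** Pr g) $ i $ k"
    by (simp add: matrix_matrix_mult_def Sr_def Pr_def if_distrib cong: if_cong)
  finally show "(Mr g ** Sr) $ i $ k = (Sr ** Pr g) $ i $ k" .
qed

lemma Sr_linv: "\<exists>T. T ** Sr = mat 1"
proof -
  have "x = 0" if "Sr *v x = 0" for x
  proof -
    have "Sr *v x = J (comb (\<lambda>k. x $ k))"
    proof -
      have "J (comb (\<lambda>k. x $ k)) = (\<Sum>k\<in>UNIV. x $ k *\<^sub>R J (Bk k))"
        unfolding comb_def using J_linear by (simp add: linear_sum linear_scale)
      then show ?thesis
        by (simp add: vec_eq_iff matrix_vector_mult_def Sr_def mult.commute)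
    qed
    then have "comb (\<lambda>k. x $ k) = 0" using that J_zero by simp
    then show "x = 0" using comb_indep by (simp add: vec_eq_iff)
  qed
  then show ?thesis using matrix_left_invertible_ker by blast
qed

definition N1 :: "'g \<Rightarrow> complex fps^('d option)^('d option)" where
  "N1 g = (\<chi> i j. (if i = j then 1 else 0) - fps_X * mapm (Mr g) $ i $ j)"

definition N2 :: "'g \<Rightarrow> complex fps^('d option)^('d option)" where
  "N2 g = (\<chi> i j. (if i = j then 1 else 0) - fps_X * mapm (Pr g) $ i $ j)"

lemma N1_N2:
  assumes g: "g \<in> carrier G" shows "det (N1 g) = det (N2 g)"
proof -
  have e: "N1 g ** mapm Sr = mapm Sr ** N2 g"
  proof (rule vec_eq_iff[THEN iffD2], rule allI, rule vec_eq_iff[THEN iffD2], rule allI)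
    fix i k
    show "(N1 g ** mapm Sr) $ i $ k = (mapm Sr ** N2 g) $ i $ k"
      unfolding N1_def N2_def IX_left IX_right
      by (simp add: mapm_mult[symmetric] Mr_Sr[OF g])
  qed
  obtain T where T: "T ** Sr = mat 1" using Sr_linv by blast
  have "det (mapm T) * det (mapm Sr) = 1"
    using T by (simp add: det_mul[symmetric] mapm_mult[symmetric] mapm_one)
  then have nz: "det (mapm Sr) \<noteq> 0" by auto
  have "det (N1 g) * det (mapm Sr) = det (mapm Sr) * det (N2 g)"
    using e by (simp add: det_mul[symmetric])
  then show ?thesis using nz by (simp add: mult.commute)
qed

lemma N2_det:
  assumes g: "g \<in> carrier G" shows "det (N2 g) = detS UNIV (Nm (sig g))"
proof -
  have "N2 g = transpose (\<chi> i j. Nm (sig g) i j)"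
    by (simp add: N2_def transpose_def mapm_def Pr_def Nm_def vec_eq_iff hc_0 hc_1)
  then have "det (N2 g) = det (\<chi> i j. Nm (sig g) i j)" by (simp only: det_transpose)
  also have "\<dots> = detS UNIV (Nm (sig g))" by (simp add: det_detS)
  finally show ?thesis .
qed

lemma N1_det: "det (N1 g) = (1 - fps_X) * detIrho A g"
proof -
  let ?N = "\<lambda>i j. N1 g $ i $ j"
  have "det (N1 g) = detS UNIV ?N" by (rule det_detS)
  also have "\<dots> = detS {None} ?N * detS (UNIV - {None}) ?N"
    by (rule detS_block) (auto simp: N1_def mapm_def Mr_def hc_0)
  also have "detS {None} ?N = 1 - fps_X"
    by (simp add: detS_single N1_def mapm_def Mr_def hc_1)
  also have "UNIV - {None} = range Some" by (auto simp: UNIV_option_conv)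
  also have "detS (range Some) ?N = detS UNIV (\<lambda>i j. ?N (Some i) (Some j))"
    by (rule detS_reindex) auto
  also have "\<dots> = detIrho A g"
    by (simp add: detIrho_def det_detS N1_def mapm_def Mr_def hc_def mult.commute)
  finally show ?thesis .
qed

lemma key_det:
  assumes g: "g \<in> carrier G" shows "(1 - fps_X) * detIrho A g = detS UNIV (Nm (sig g))"
  using N1_det N1_N2[OF g] N2_det[OF g] by simp

end


context ehrsimp begin

lemma FixN_alt: "FixN g = FixS UNIV (sig g)"
  by (simp add: FixN_def FixS_def)

lemma gen_LP:
  assumes g: "g \<in> carrier G"
  shows "Abs_fps (\<lambda>m. permchar A b P m g) = gen (BoxFix g) (\<lambda>w. nat (snd w)) * gen (FixN g) (\<lambda>nn. sum nn UNIV)"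
proof -
  have "gen (BoxFix g \<times> FixN g) (\<lambda>(w, nn). nat (snd w) + sum nn UNIV) = Abs_fps (\<lambda>m. of_nat (card (LPg m g)))"
    by (rule gen_eqI) (rule bij_betw_same_card[OF count_bij[OF g]])
  moreover have "gen (BoxFix g \<times> FixN g) (\<lambda>(w, nn). nat (snd w) + sum nn UNIV)
      = gen (BoxFix g) (\<lambda>w. nat (snd w)) * gen (FixN g) (\<lambda>nn. sum nn UNIV)"
  proof (rule gen_prod)
    fix k
    show "finite {a \<in> BoxFix g. nat (snd a) = k}"
      by (rule finite_subset[OF _ BOX_finite]) (auto simp: BoxFix_def)
    show "finite {a \<in> FixN g. sum a UNIV = k}"
      using fix_level_finite[of UNIV "sig g" k] by (simp add: FixN_alt wtS_def)
  qed
  moreover have "Abs_fps (\<lambda>m. permchar A b P m g) = Abs_fps (\<lambda>m. of_nat (card (LPg m g)))"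
    by (simp add: permchar_def LPg_def)
  ultimately show ?thesis by simp
qed

lemma D_inv:
  assumes g: "g \<in> carrier G"
  shows "gen (FixN g) (\<lambda>nn. sum nn UNIV) * ((1 - fps_X) * detIrho A g) = 1"
proof -
  have "detS UNIV (Nm (sig g)) * gen {n. \<forall>i. n (sig g i) = n i} (\<lambda>n. \<Sum>i\<in>UNIV. n i) = 1"
    by (rule perm_det_gen[OF sig_perm[OF g]])
  then show ?thesis using key_det[OF g] by (simp add: FixN_def mult.commute)
qed

lemma phi_gen:
  assumes g: "g \<in> carrier G"
  shows "phi A b P g = gen (BoxFix g) (\<lambda>w. nat (snd w))"
proof -
  have "phi A b P g = Abs_fps (\<lambda>m. permchar A b P m g) * ((1 - fps_X) * detIrho A g)"
    by (simp add: phi_def mult.assoc)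
  also have "\<dots> = gen (BoxFix g) (\<lambda>w. nat (snd w)) * (gen (FixN g) (\<lambda>nn. sum nn UNIV) * ((1 - fps_X) * detIrho A g))"
    by (simp add: gen_LP[OF g] mult.assoc)
  also have "\<dots> = gen (BoxFix g) (\<lambda>w. nat (snd w))" by (simp add: D_inv[OF g])
  finally show ?thesis .
qed

lemma BOX_snd_nonneg: "w \<in> BOX CARD('d) vs \<Longrightarrow> snd w \<ge> 0"
proof -
  assume "w \<in> BOX CARD('d) vs"
  then obtain a where a: "\<forall>k. 0 \<le> a k \<and> a k < 1" "emb w = comb a" by (auto simp: BOX_iff)
  show "snd w \<ge> 0" by (rule box_snd(2)[OF a])
qed

lemma phi_nth:
  assumes g: "g \<in> carrier G"
  shows "fps_nth (phi A b P g) i = of_nat (card {w \<in> BOX CARD('d) vs. snd w = int i \<and> latact A b g w = w})"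
proof -
  have "{w \<in> BoxFix g. nat (snd w) = i} = {w \<in> BOX CARD('d) vs. snd w = int i \<and> latact A b g w = w}"
    using BOX_snd_nonneg by (auto simp: BoxFix_def)
  then show ?thesis by (simp add: phi_gen[OF g] gen_nth)
qed

lemma bary_fixed:
  assumes g: "g \<in> carrier G"
  shows "\<exists>x\<in>P. realact A b g x = x"
proof -
  define x where "x = comb (\<lambda>k. 1 / real CARD('d option))"
  have "x \<in> P" unfolding P_comb x_def
    by (intro CollectI exI[of _ "\<lambda>k. 1 / real CARD('d option)"]) simp
  moreover have "realact A b g x = x" unfolding x_def by (simp add: fixed_comb[OF g])
  ultimately show ?thesis by blast
qed

lemma fixpart_lat:
  assumes g: "g \<in> carrier G"
  shows "latpts m (fixpart A b g P) = LPg m g"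
proof
  have lin: "linear (realact A b g)" by (rule realact_linear)
  show "latpts m (fixpart A b g P) \<subseteq> LPg m g"
  proof
    fix v assume "v \<in> latpts m (fixpart A b g P)"
    then obtain x where x: "x \<in> P" "realact A b g x = x" "emb v = real m *\<^sub>R x"
      by (auto simp: latpts_def fixpart_def)
    have "emb v \<in> (\<lambda>y. real m *\<^sub>R y) ` P" using x by blast
    moreover have "realact A b g (emb v) = emb v" using x lin by (simp add: linear_scale)
    ultimately show "v \<in> LPg m g" by (simp add: LPg_def latpts_def latact_fixed_iff)
  qed
  show "LPg m g \<subseteq> latpts m (fixpart A b g P)"
  proof
    fix v assume v: "v \<in> LPg m g"
    then obtain x where x: "x \<in> P" "emb v = real m *\<^sub>R x" by (auto simp: LPg_def latpts_def)
    have f: "realact A b g (emb v) = emb v" using v by (simp add: LPg_def latact_fixed_iff)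
    show "v \<in> latpts m (fixpart A b g P)"
    proof (cases "m = 0")
      case True
      obtain z where z: "z \<in> P" "realact A b g z = z" using bary_fixed[OF g] by blast
      have "emb v = real m *\<^sub>R z" using x True by simp
      then show ?thesis using z by (auto simp: latpts_def fixpart_def)
    next
      case False
      have "real m *\<^sub>R realact A b g x = real m *\<^sub>R x" using f x lin by (simp add: linear_scale)
      then have "realact A b g x = x" using False by simp
      then show ?thesis using x by (auto simp: latpts_def fixpart_def)
    qed
  qed
qed

lemma claim2:
  assumes g: "g \<in> carrier G"
  shows "Abs_fps (\<lambda>m. of_nat (card (latpts m (fixpart A b g P))) :: complex)
        = (\<Sum>w\<in>{w \<in> BOX CARD('d) vs. latact A b g w = w}. fps_X ^ nat (snd w))
          / ((1 - fps_X) * detIrho A g)"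
proof -
  let ?D = "(1 - fps_X) * detIrho A g"
  have D0: "?D \<noteq> 0" using D_inv[OF g] by auto
  have a: "Abs_fps (\<lambda>m. of_nat (card (latpts m (fixpart A b g P))) :: complex) = Abs_fps (\<lambda>m. permchar A b P m g)"
    by (simp add: fixpart_lat[OF g] permchar_def LPg_def)
  have "Abs_fps (\<lambda>m. permchar A b P m g) * ?D = phi A b P g"
    by (simp add: phi_def mult.assoc)
  also have "\<dots> = (\<Sum>w\<in>{w \<in> BOX CARD('d) vs. latact A b g w = w}. fps_X ^ nat (snd w))"
    unfolding phi_gen[OF g] BoxFix_def
    by (rule gen_finite) (rule finite_subset[OF _ BOX_finite], auto)
  finally have e: "Abs_fps (\<lambda>m. permchar A b P m g) * ?D = (\<Sum>w\<in>{w \<in> BOX CARD('d) vs. latact A b g w = w}. fps_X ^ nat (snd w))" .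
  show ?thesis unfolding a e[symmetric] using D0 by simp
qed

end


context ehrsimp begin

abbreviation "orb x \<equiv> act_orbit G (latact A b) x"
abbreviation "stb x \<equiv> act_stabilizer G (latact A b) x"

lemma one_c: "\<one>\<^bsub>G\<^esub> \<in> carrier G" by (rule monoid.one_closed[OF group.is_monoid[OF grp]])

lemma inv_cancel_left: "h \<in> carrier G \<Longrightarrow> s \<in> carrier G \<Longrightarrow> inv\<^bsub>G\<^esub> h \<otimes>\<^bsub>G\<^esub> (h \<otimes>\<^bsub>G\<^esub> s) = s"
proof -
  interpret group G by (rule grp)
  assume "h \<in> carrier G" "s \<in> carrier G"
  then show ?thesis by (simp add: m_assoc[symmetric])
qed

lemma inv_cancel_left2: "h \<in> carrier G \<Longrightarrow> s \<in> carrier G \<Longrightarrow> h \<otimes>\<^bsub>G\<^esub> (inv\<^bsub>G\<^esub> h \<otimes>\<^bsub>G\<^esub> s) = s"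
proof -
  interpret group G by (rule grp)
  assume "h \<in> carrier G" "s \<in> carrier G"
  then show ?thesis by (simp add: m_assoc[symmetric])
qed

lemma orb_self: "x \<in> orb x"
  unfolding act_orbit_def by (rule image_eqI[of _ _ "\<one>\<^bsub>G\<^esub>"]) (simp_all add: act_one one_c)

lemma act_inv_left:
  assumes h: "h \<in> carrier G" shows "latact A b (inv\<^bsub>G\<^esub> h) (latact A b h x) = x"
proof -
  have ih: "inv\<^bsub>G\<^esub> h \<in> carrier G" using h by (rule group.inv_closed[OF grp])
  have "latact A b (inv\<^bsub>G\<^esub> h) (latact A b h x) = latact A b (inv\<^bsub>G\<^esub> h \<otimes>\<^bsub>G\<^esub> h) x"
    by (rule act_mult[OF ih h, symmetric])
  also have "\<dots> = x" using group.l_inv[OF grp h] act_one by simp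
  finally show ?thesis .
qed

lemma orb_eq:
  assumes y: "y \<in> orb x" shows "orb y = orb x"
proof -
  obtain h where h: "h \<in> carrier G" "y = latact A b h x" using y by (auto simp: act_orbit_def)
  have ih: "inv\<^bsub>G\<^esub> h \<in> carrier G" using h by (simp add: group.inv_closed[OF grp])
  show ?thesis
  proof
    show "orb y \<subseteq> orb x"
    proof
      fix z assume "z \<in> orb y"
      then obtain g where g: "g \<in> carrier G" "z = latact A b g y" by (auto simp: act_orbit_def)
      have "z = latact A b (g \<otimes>\<^bsub>G\<^esub> h) x" using g h act_mult by simp
      moreover have "g \<otimes>\<^bsub>G\<^esub> h \<in> carrier G" using g h by (simp add: group.subgroup_self[OF grp] monoid.m_closed[OF group.is_monoid[OF grp]])
      ultimately show "z \<in> orb x" by (auto simp: act_orbit_def)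
    qed
    show "orb x \<subseteq> orb y"
    proof
      fix z assume "z \<in> orb x"
      then obtain g where g: "g \<in> carrier G" "z = latact A b g x" by (auto simp: act_orbit_def)
      have gi: "g \<otimes>\<^bsub>G\<^esub> inv\<^bsub>G\<^esub> h \<in> carrier G" using g ih by (simp add: monoid.m_closed[OF group.is_monoid[OF grp]])
      have "latact A b (g \<otimes>\<^bsub>G\<^esub> inv\<^bsub>G\<^esub> h) y = latact A b g (latact A b (inv\<^bsub>G\<^esub> h) (latact A b h x))"
        using act_mult[OF g(1) ih] h by simp
      also have "\<dots> = z" using act_inv_left[OF h(1)] g by simp
      finally show "z \<in> orb y" using gi by (auto simp: act_orbit_def intro!: image_eqI[of _ _ "g \<otimes>\<^bsub>G\<^esub> inv\<^bsub>G\<^esub> h"])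
    qed
  qed
qed

lemma orb_finite: "finite (orb x)"
  using fin by (simp add: act_orbit_def)

lemma orbit_stab: "card (orb x) * card (stb x) = card (carrier G)"
proof -
  define F where "F = (\<lambda>y. {g \<in> carrier G. latact A b g x = y})"
  have cu: "carrier G = (\<Union>y\<in>orb x. F y)" by (auto simp: F_def act_orbit_def)
  have "card (carrier G) = (\<Sum>y\<in>orb x. card (F y))"
    unfolding cu
    by (rule card_UN_disjoint) (use orb_finite fin in \<open>auto simp: F_def\<close>)
  also have "\<dots> = (\<Sum>y\<in>orb x. card (stb x))"
  proof (rule sum.cong[OF refl])
    fix y assume "y \<in> orb x"
    then obtain h where h: "h \<in> carrier G" "y = latact A b h x" by (auto simp: act_orbit_def)
    have ih: "inv\<^bsub>G\<^esub> h \<in> carrier G" using h by (simp add: group.inv_closed[OF grp])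
    have mc: "\<And>a c. a \<in> carrier G \<Longrightarrow> c \<in> carrier G \<Longrightarrow> a \<otimes>\<^bsub>G\<^esub> c \<in> carrier G"
      by (simp add: monoid.m_closed[OF group.is_monoid[OF grp]])
    have "bij_betw (\<lambda>s. h \<otimes>\<^bsub>G\<^esub> s) (stb x) (F y)"
    proof (rule bij_betw_byWitness[where f' = "\<lambda>s. inv\<^bsub>G\<^esub> h \<otimes>\<^bsub>G\<^esub> s"])
      show "\<forall>s\<in>stb x. inv\<^bsub>G\<^esub> h \<otimes>\<^bsub>G\<^esub> (h \<otimes>\<^bsub>G\<^esub> s) = s"
        using h by (auto simp: act_stabilizer_def inv_cancel_left)
      show "\<forall>s\<in>F y. h \<otimes>\<^bsub>G\<^esub> (inv\<^bsub>G\<^esub> h \<otimes>\<^bsub>G\<^esub> s) = s"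
        using h ih by (auto simp: F_def inv_cancel_left2)
      show "(\<lambda>s. h \<otimes>\<^bsub>G\<^esub> s) ` stb x \<subseteq> F y"
      proof
        fix t assume "t \<in> (\<lambda>s. h \<otimes>\<^bsub>G\<^esub> s) ` stb x"
        then obtain s where s: "s \<in> carrier G" "latact A b s x = x" "t = h \<otimes>\<^bsub>G\<^esub> s"
          by (auto simp: act_stabilizer_def)
        have "latact A b t x = latact A b h (latact A b s x)" using s h act_mult[OF h(1) s(1)] by simp
        then have "latact A b t x = y" using s h by simp
        then show "t \<in> F y" using s h mc by (simp add: F_def)
      qed
      show "(\<lambda>s. inv\<^bsub>G\<^esub> h \<otimes>\<^bsub>G\<^esub> s) ` F y \<subseteq> stb x"
      proof
        fix t assume "t \<in> (\<lambda>s. inv\<^bsub>G\<^esub> h \<otimes>\<^bsub>G\<^esub> s) ` F y"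
        then obtain s where s: "s \<in> carrier G" "latact A b s x = y" "t = inv\<^bsub>G\<^esub> h \<otimes>\<^bsub>G\<^esub> s"
          by (auto simp: F_def)
        have "latact A b t x = latact A b (inv\<^bsub>G\<^esub> h) (latact A b h x)"
          using s h act_mult[OF ih s(1)] by simp
        also have "\<dots> = x" by (rule act_inv_left[OF h(1)])
        finally show "t \<in> stb x" using s ih mc by (simp add: act_stabilizer_def)
      qed
    qed
    then show "card (F y) = card (stb x)" by (simp add: bij_betw_same_card)
  qed
  finally show ?thesis by simp
qed

lemma burnside_w:
  assumes X: "finite X"
  shows "(\<Sum>g\<in>carrier G. (chi g :: complex) * of_nat (card {x\<in>X. latact A b g x = x}))
       = (\<Sum>x\<in>X. \<Sum>g\<in>stb x. chi g)"
proof -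
  have "(\<Sum>g\<in>carrier G. chi g * of_nat (card {x\<in>X. latact A b g x = x}))
      = (\<Sum>g\<in>carrier G. \<Sum>x\<in>X. if latact A b g x = x then chi g else 0)"
  proof (rule sum.cong[OF refl])
    fix g
    have "(\<Sum>x\<in>X. if latact A b g x = x then chi g else 0) = (\<Sum>x\<in>{x\<in>X. latact A b g x = x}. chi g)"
      by (rule sum.inter_filter[OF X, symmetric])
    also have "\<dots> = of_nat (card {x\<in>X. latact A b g x = x}) * chi g" by simp
    finally show "chi g * of_nat (card {x\<in>X. latact A b g x = x}) = (\<Sum>x\<in>X. if latact A b g x = x then chi g else 0)"
      by (simp add: mult.commute)
  qed
  also have "\<dots> = (\<Sum>x\<in>X. \<Sum>g\<in>carrier G. if latact A b g x = x then chi g else 0)"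
    by (rule sum.swap)
  also have "\<dots> = (\<Sum>x\<in>X. \<Sum>g\<in>stb x. chi g)"
    using fin by (simp add: sum.inter_filter act_stabilizer_def)
  finally show ?thesis .
qed

lemma orbit_sum:
  assumes X: "finite X" and inv: "\<And>g x. g \<in> carrier G \<Longrightarrow> x \<in> X \<Longrightarrow> latact A b g x \<in> X"
    and Qi: "\<And>g x. g \<in> carrier G \<Longrightarrow> x \<in> X \<Longrightarrow> Q x \<Longrightarrow> Q (latact A b g x)"
  shows "(\<Sum>x\<in>X. (if Q x then 1 else 0) / of_nat (card (orb x)))
       = (of_nat (card {Ob \<in> act_orbits G (latact A b) X. \<forall>w\<in>Ob. Q w}) :: complex)"
proof -
  let ?Ob = "act_orbits G (latact A b) X"
  let ?f = "\<lambda>x. (if Q x then 1 else 0) / of_nat (card (orb x)) :: complex"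
  have sub: "orb x \<subseteq> X" if "x \<in> X" for x
  proof
    fix z assume "z \<in> orb x"
    then obtain g where "g \<in> carrier G" "z = latact A b g x" unfolding act_orbit_def by blast
    then show "z \<in> X" using inv that by simp
  qed
  have XU: "X = \<Union>?Ob"
  proof
    show "X \<subseteq> \<Union>?Ob" using orb_self by (auto simp: act_orbits_def)
    show "\<Union>?Ob \<subseteq> X"
    proof
      fix z assume "z \<in> \<Union>?Ob"
      then obtain x where "x \<in> X" "z \<in> orb x" by (auto simp: act_orbits_def)
      then show "z \<in> X" using sub by blast
    qed
  qed
  have Qorb: "Q y \<longleftrightarrow> Q x" if xX: "x \<in> X" and yO: "y \<in> orb x" for x y
  proof -
    obtain h where h: "h \<in> carrier G" "y = latact A b h x" using yO unfolding act_orbit_def by blast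
    have ih: "inv\<^bsub>G\<^esub> h \<in> carrier G" using h by (simp add: group.inv_closed[OF grp])
    have yX: "y \<in> X" using h xX inv by simp
    have xe: "x = latact A b (inv\<^bsub>G\<^esub> h) y" using act_inv_left[OF h(1)] h by simp
    show ?thesis
    proof
      assume "Q y"
      then have "Q (latact A b (inv\<^bsub>G\<^esub> h) y)" by (rule Qi[OF ih yX])
      then show "Q x" using xe by simp
    next
      assume "Q x"
      then have "Q (latact A b h x)" by (rule Qi[OF h(1) xX])
      then show "Q y" using h(2) by simp
    qed
  qed
  have e: "\<Union>?Ob = X" using XU by (rule sym)
  have U: "sum ?f (\<Union>?Ob) = sum (sum ?f) ?Ob"
  proof (rule sum.Union_disjoint[unfolded o_def])
    show "\<forall>A\<in>?Ob. finite A" using orb_finite by (auto simp: act_orbits_def)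
    show "\<forall>A\<in>?Ob. \<forall>B\<in>?Ob. A \<noteq> B \<longrightarrow> A \<inter> B = {}"
    proof (intro ballI impI)
      fix A1 B1 assume "A1 \<in> ?Ob" "B1 \<in> ?Ob" "A1 \<noteq> B1"
      then obtain x y where "A1 = orb x" "B1 = orb y" by (auto simp: act_orbits_def)
      then show "A1 \<inter> B1 = {}" using \<open>A1 \<noteq> B1\<close> orb_eq by blast
    qed
  qed
  have "sum ?f X = sum (sum ?f) ?Ob" using U[unfolded e] .
  also have "\<dots> = (\<Sum>Ob\<in>?Ob. if \<forall>w\<in>Ob. Q w then 1 else 0)"
  proof (rule sum.cong[OF refl])
    fix Ob assume "Ob \<in> ?Ob"
    then obtain x0 where x0: "x0 \<in> X" "Ob = orb x0" by (auto simp: act_orbits_def)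
    have "x0 \<in> Ob" using x0 orb_self by simp
    moreover have "finite Ob" using x0 orb_finite by simp
    ultimately have cO: "card Ob \<noteq> 0" by (simp add: card_eq_0_iff) blast
    have "sum ?f Ob = (\<Sum>x\<in>Ob. (if Q x0 then 1 else 0) / of_nat (card Ob))"
    proof (rule sum.cong[OF refl])
      fix x assume "x \<in> Ob"
      then show "?f x = (if Q x0 then 1 else 0) / of_nat (card Ob)"
        using x0 orb_eq Qorb by auto
    qed
    also have "\<dots> = (if Q x0 then 1 else 0)" using cO by simp
    also have "(\<forall>w\<in>Ob. Q w) \<longleftrightarrow> Q x0" using x0 Qorb orb_self by blast
    then have "(if Q x0 then 1 else 0) = (if \<forall>w\<in>Ob. Q w then 1 else (0::complex))" by simp
    finally show "sum ?f Ob = (if \<forall>w\<in>Ob. Q w then 1 else 0)" .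
  qed
  also have "\<dots> = of_nat (card {Ob \<in> ?Ob. \<forall>w\<in>Ob. Q w})"
  proof -
    have "finite ?Ob" using X by (simp add: act_orbits_def)
    then show ?thesis by (simp add: sum.If_cases Int_def)
  qed
  finally show ?thesis .
qed

end


context ehrsimp begin

lemma mc: "g \<in> carrier G \<Longrightarrow> h \<in> carrier G \<Longrightarrow> g \<otimes>\<^bsub>G\<^esub> h \<in> carrier G"
  by (rule monoid.m_closed[OF group.is_monoid[OF grp]])

lemma A_mult: "g \<in> carrier G \<Longrightarrow> h \<in> carrier G \<Longrightarrow> A g ** A h = A (g \<otimes>\<^bsub>G\<^esub> h)"
  by (rule matrix_of_latact(1)[of A b g h "g \<otimes>\<^bsub>G\<^esub> h"]) (simp add: act_mult)

lemma A_one: "A \<one>\<^bsub>G\<^esub> = mat 1"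
proof -
  have "A \<one>\<^bsub>G\<^esub> *v x = x" for x using act_one[of "(x, 0)"] by (simp add: latact_def)
  then show ?thesis by (simp add: matrix_eq)
qed

lemma dA_mult: "g \<in> carrier G \<Longrightarrow> h \<in> carrier G \<Longrightarrow> det (A (g \<otimes>\<^bsub>G\<^esub> h)) = det (A g) * det (A h)"
  by (simp add: A_mult[symmetric] det_mul)

lemma dA_inv: "g \<in> carrier G \<Longrightarrow> det (A (inv\<^bsub>G\<^esub> g)) * det (A g) = 1"
proof -
  assume g: "g \<in> carrier G"
  have ig: "inv\<^bsub>G\<^esub> g \<in> carrier G" using g by (rule group.inv_closed[OF grp])
  have "det (A (inv\<^bsub>G\<^esub> g)) * det (A g) = det (A (inv\<^bsub>G\<^esub> g \<otimes>\<^bsub>G\<^esub> g))" by (simp add: dA_mult[OF ig g])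
  also have "\<dots> = 1" using group.l_inv[OF grp g] A_one by simp
  finally show ?thesis .
qed

lemma dA_pm: "g \<in> carrier G \<Longrightarrow> det (A g) = 1 \<or> det (A g) = -1"
  using dA_inv zmult_eq_1_iff by (metis mult.commute)

definition Kd where "Kd = {g \<in> carrier G. det (A g) = 1}"

lemma stab_sum:
  "(\<Sum>g\<in>stb x. of_int (det (A g)) :: complex) = (if stb x \<subseteq> Kd then of_nat (card (stb x)) else 0)"
proof (cases "stb x \<subseteq> Kd")
  case True
  then have "(\<Sum>g\<in>stb x. of_int (det (A g)) :: complex) = (\<Sum>g\<in>stb x. 1)"
    by (intro sum.cong) (auto simp: Kd_def)
  then show ?thesis using True by simp
next
  case False
  then obtain h where h: "h \<in> stb x" "det (A h) \<noteq> 1" by (auto simp: Kd_def act_stabilizer_def)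
  have hc: "h \<in> carrier G" and hx: "latact A b h x = x" using h by (auto simp: act_stabilizer_def)
  have ih: "inv\<^bsub>G\<^esub> h \<in> carrier G" using hc by (rule group.inv_closed[OF grp])
  have hm: "det (A h) = -1" using dA_pm[OF hc] h by simp
  have ihx: "latact A b (inv\<^bsub>G\<^esub> h) x = x" using act_inv_left[OF hc, of x] hx by simp
  have bij: "bij_betw (\<lambda>s. h \<otimes>\<^bsub>G\<^esub> s) (stb x) (stb x)"
  proof (rule bij_betw_byWitness[where f' = "\<lambda>s. inv\<^bsub>G\<^esub> h \<otimes>\<^bsub>G\<^esub> s"])
    show "\<forall>s\<in>stb x. inv\<^bsub>G\<^esub> h \<otimes>\<^bsub>G\<^esub> (h \<otimes>\<^bsub>G\<^esub> s) = s"
      using hc by (simp add: act_stabilizer_def inv_cancel_left)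
    show "\<forall>s\<in>stb x. h \<otimes>\<^bsub>G\<^esub> (inv\<^bsub>G\<^esub> h \<otimes>\<^bsub>G\<^esub> s) = s"
      using hc by (simp add: act_stabilizer_def inv_cancel_left2)
    show "(\<lambda>s. h \<otimes>\<^bsub>G\<^esub> s) ` stb x \<subseteq> stb x"
    proof
      fix t assume "t \<in> (\<lambda>s. h \<otimes>\<^bsub>G\<^esub> s) ` stb x"
      then obtain s where s: "s \<in> carrier G" "latact A b s x = x" "t = h \<otimes>\<^bsub>G\<^esub> s"
        by (auto simp: act_stabilizer_def)
      have "latact A b t x = x" using s hc hx act_mult[OF hc s(1)] by simp
      then show "t \<in> stb x" using s hc mc by (simp add: act_stabilizer_def)
    qed
    show "(\<lambda>s. inv\<^bsub>G\<^esub> h \<otimes>\<^bsub>G\<^esub> s) ` stb x \<subseteq> stb x"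
    proof
      fix t assume "t \<in> (\<lambda>s. inv\<^bsub>G\<^esub> h \<otimes>\<^bsub>G\<^esub> s) ` stb x"
      then obtain s where s: "s \<in> carrier G" "latact A b s x = x" "t = inv\<^bsub>G\<^esub> h \<otimes>\<^bsub>G\<^esub> s"
        by (auto simp: act_stabilizer_def)
      have "latact A b t x = x" using s ih ihx act_mult[OF ih s(1)] by simp
      then show "t \<in> stb x" using s ih mc by (simp add: act_stabilizer_def)
    qed
  qed
  let ?S = "(\<Sum>g\<in>stb x. of_int (det (A g)) :: complex)"
  have "?S = (\<Sum>s\<in>stb x. of_int (det (A (h \<otimes>\<^bsub>G\<^esub> s))))"
    by (rule sum.reindex_bij_betw[OF bij, symmetric])
  also have "\<dots> = (\<Sum>s\<in>stb x. - of_int (det (A s)))"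
  proof (rule sum.cong[OF refl])
    fix s assume "s \<in> stb x"
    then have "s \<in> carrier G" by (simp add: act_stabilizer_def)
    then show "(of_int (det (A (h \<otimes>\<^bsub>G\<^esub> s))) :: complex) = - of_int (det (A s))"
      using dA_mult[OF hc] hm by simp
  qed
  also have "\<dots> = - ?S" by (simp add: sum_negf)
  finally have "?S = 0" by simp
  then show ?thesis using False by simp
qed

lemma Q_inv:
  assumes h: "h \<in> carrier G" and q: "stb x \<subseteq> Kd"
  shows "stb (latact A b h x) \<subseteq> Kd"
proof
  fix s assume s: "s \<in> stb (latact A b h x)"
  then have sc: "s \<in> carrier G" and sx: "latact A b s (latact A b h x) = latact A b h x"
    by (auto simp: act_stabilizer_def)
  have ih: "inv\<^bsub>G\<^esub> h \<in> carrier G" using h by (rule group.inv_closed[OF grp])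
  define t where "t = inv\<^bsub>G\<^esub> h \<otimes>\<^bsub>G\<^esub> (s \<otimes>\<^bsub>G\<^esub> h)"
  have tc: "t \<in> carrier G" using ih sc h mc by (simp add: t_def)
  have "latact A b t x = latact A b (inv\<^bsub>G\<^esub> h) (latact A b s (latact A b h x))"
    using act_mult[OF ih mc[OF sc h]] act_mult[OF sc h] by (simp add: t_def)
  also have "\<dots> = x" using sx act_inv_left[OF h] by simp
  finally have "t \<in> stb x" using tc by (simp add: act_stabilizer_def)
  then have "det (A t) = 1" using q by (auto simp: Kd_def)
  moreover have "det (A t) = det (A s) * (det (A (inv\<^bsub>G\<^esub> h)) * det (A h))"
    by (simp add: t_def dA_mult[OF ih mc[OF sc h]] dA_mult[OF sc h] algebra_simps)
  ultimately have "det (A s) = 1" using dA_inv[OF h] by simp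
  then show "s \<in> Kd" using sc by (simp add: Kd_def)
qed

definition Xi :: "nat \<Rightarrow> ((int^'d) \<times> int) set" where
  "Xi i = {w \<in> BOX CARD('d) vs. snd w = int i}"

lemma Xi_fin: "finite (Xi i)"
  by (rule finite_subset[OF _ BOX_finite]) (auto simp: Xi_def)

lemma Xi_inv:
  assumes g: "g \<in> carrier G" and w: "w \<in> Xi i"
  shows "latact A b g w \<in> Xi i"
proof -
  obtain a where a: "\<forall>k. 0 \<le> a k \<and> a k < 1" "emb w = comb a" using w by (auto simp: Xi_def BOX_iff)
  have "emb (latact A b g w) = comb (\<lambda>k. a (Hilbert_Choice.inv (sig g) k))"
    using a(2) by (simp add: realact_emb[symmetric] realact_comb[OF g])
  then have "latact A b g w \<in> BOX CARD('d) vs" using a(1) by (auto simp: BOX_iff)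
  moreover have "snd (latact A b g w) = snd w" by (simp add: latact_def)
  ultimately show ?thesis using w by (simp add: Xi_def)
qed

lemma phi_Xi:
  "g \<in> carrier G \<Longrightarrow> fps_nth (phi A b P g) i = of_nat (card {x \<in> Xi i. latact A b g x = x})"
  by (simp add: phi_nth Xi_def conj_assoc)

lemma card_G_nz: "card (carrier G) \<noteq> 0"
  using fin one_c by auto

lemma claim3:
  "char_inner G (\<lambda>g. fps_nth (phi A b P g) i) (\<lambda>g. 1)
     = of_nat (card (act_orbits G (latact A b) (Xi i)))"
proof -
  have "(\<Sum>g\<in>carrier G. fps_nth (phi A b P g) i * cnj 1)
      = (\<Sum>g\<in>carrier G. (\<lambda>_. 1) g * of_nat (card {x \<in> Xi i. latact A b g x = x}))"
    by (rule sum.cong[OF refl]) (simp add: phi_Xi)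
  also have "\<dots> = (\<Sum>x\<in>Xi i. \<Sum>g\<in>stb x. (\<lambda>_. 1::complex) g)"
    by (rule burnside_w[OF Xi_fin])
  also have "\<dots> = (\<Sum>x\<in>Xi i. of_nat (card (stb x)))" by simp
  finally have e: "char_inner G (\<lambda>g. fps_nth (phi A b P g) i) (\<lambda>g. 1)
      = (\<Sum>x\<in>Xi i. of_nat (card (stb x))) / of_nat (card (carrier G))"
    by (simp add: char_inner_def)
  also have "\<dots> = (\<Sum>x\<in>Xi i. (if True then 1 else 0) / of_nat (card (orb x)))"
    unfolding sum_divide_distrib
  proof (rule sum.cong[OF refl])
    fix x
    have "of_nat (card (orb x)) * of_nat (card (stb x)) = (of_nat (card (carrier G)) :: complex)"
      using orbit_stab[of x] by (metis of_nat_mult)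
    moreover have "card (orb x) \<noteq> 0" using orb_self orb_finite by (metis card_0_eq empty_iff)
    ultimately show "of_nat (card (stb x)) / of_nat (card (carrier G)) = (if True then 1 else 0) / (of_nat (card (orb x)) :: complex)"
      using card_G_nz by (simp add: field_simps)
  qed
  also have "\<dots> = of_nat (card {Ob \<in> act_orbits G (latact A b) (Xi i). \<forall>w\<in>Ob. True})"
    by (rule orbit_sum[OF Xi_fin Xi_inv]) auto
  finally show ?thesis by simp
qed

lemma claim4:
  "char_inner G (\<lambda>g. fps_nth (phi A b P g) i) (\<lambda>g. of_int (det (A g)))
     = of_nat (card {Ob \<in> act_orbits G (latact A b) (Xi i). \<forall>w\<in>Ob. stb w \<subseteq> Kd})"
proof -
  have "(\<Sum>g\<in>carrier G. fps_nth (phi A b P g) i * cnj (of_int (det (A g))))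
      = (\<Sum>g\<in>carrier G. (\<lambda>g. of_int (det (A g))) g * of_nat (card {x \<in> Xi i. latact A b g x = x}))"
    by (rule sum.cong[OF refl]) (simp add: phi_Xi mult.commute)
  also have "\<dots> = (\<Sum>x\<in>Xi i. \<Sum>g\<in>stb x. (\<lambda>g. of_int (det (A g)) :: complex) g)"
    by (rule burnside_w[OF Xi_fin])
  also have "\<dots> = (\<Sum>x\<in>Xi i. if stb x \<subseteq> Kd then of_nat (card (stb x)) else 0)"
    by (simp add: stab_sum)
  finally have e: "char_inner G (\<lambda>g. fps_nth (phi A b P g) i) (\<lambda>g. of_int (det (A g)))
      = (\<Sum>x\<in>Xi i. if stb x \<subseteq> Kd then of_nat (card (stb x)) else 0) / of_nat (card (carrier G))"
    by (simp add: char_inner_def)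
  also have "\<dots> = (\<Sum>x\<in>Xi i. (if stb x \<subseteq> Kd then 1 else 0) / of_nat (card (orb x)))"
    unfolding sum_divide_distrib
  proof (rule sum.cong[OF refl])
    fix x
    have "of_nat (card (orb x)) * of_nat (card (stb x)) = (of_nat (card (carrier G)) :: complex)"
      using orbit_stab[of x] by (metis of_nat_mult)
    moreover have "card (orb x) \<noteq> 0" using orb_self orb_finite by (metis card_0_eq empty_iff)
    ultimately show "(if stb x \<subseteq> Kd then of_nat (card (stb x)) else 0) / of_nat (card (carrier G))
        = (if stb x \<subseteq> Kd then 1 else 0) / (of_nat (card (orb x)) :: complex)"
      using card_G_nz by (simp add: field_simps)
  qed
  also have "\<dots> = of_nat (card {Ob \<in> act_orbits G (latact A b) (Xi i). \<forall>w\<in>Ob. stb w \<subseteq> Kd})"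
    by (rule orbit_sum[OF Xi_fin Xi_inv]) (simp_all add: Q_inv)
  finally show ?thesis .
qed

end

theorem proposition6p1:
  fixes G :: "('g, 'c) monoid_scheme"
    and A :: "'g \<Rightarrow> int^'d^'d" and b :: "'g \<Rightarrow> int^'d"
    and vs :: "nat \<Rightarrow> (int^'d) \<times> int"
    and P :: "((real^'d) \<times> real) set"
  assumes grp: "group G" and fin: "finite (carrier G)"
    and act_one: "\<And>v. latact A b \<one>\<^bsub>G\<^esub> v = v"
    and act_mult: "\<And>g h v. g \<in> carrier G \<Longrightarrow> h \<in> carrier G \<Longrightarrow>
                     latact A b (g \<otimes>\<^bsub>G\<^esub> h) v = latact A b g (latact A b h v)"
    and vs_height: "\<And>i. i \<le> CARD('d) \<Longrightarrow> snd (vs i) = 1"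
    and vs_inj: "inj_on vs {0..CARD('d)}"
    and vs_indep: "\<not> affine_dependent (emb ` vs ` {0..CARD('d)})"
    and P_def: "P = convex hull (emb ` vs ` {0..CARD('d)})"
    and P_inv: "\<And>g. g \<in> carrier G \<Longrightarrow> realact A b g ` P = P"
  shows
    "(\<forall>i. \<forall>g\<in>carrier G. fps_nth (phi A b P g) i
          = of_nat (card {w \<in> BOX CARD('d) vs. snd w = int i \<and> latact A b g w = w}))
   \<and> (\<forall>g\<in>carrier G.
        Abs_fps (\<lambda>m. of_nat (card (latpts m (fixpart A b g P))) :: complex)
        = (\<Sum>w\<in>{w \<in> BOX CARD('d) vs. latact A b g w = w}. fps_X ^ nat (snd w))
          / ((1 - fps_X) * detIrho A g))
   \<and> (\<forall>i. char_inner G (\<lambda>g. fps_nth (phi A b P g) i) (\<lambda>g. 1)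
          = of_nat (card (act_orbits G (latact A b) {w \<in> BOX CARD('d) vs. snd w = int i})))
   \<and> (\<forall>i. char_inner G (\<lambda>g. fps_nth (phi A b P g) i) (\<lambda>g. of_int (det (A g)))
          = of_nat (card {Orb \<in> act_orbits G (latact A b) {w \<in> BOX CARD('d) vs. snd w = int i}.
                            \<forall>w\<in>Orb. act_stabilizer G (latact A b) w \<subseteq> {g \<in> carrier G. det (A g) = 1}}))"
proof -
  interpret E: ehrsimp G A b vs P
    by (rule ehrsimp.intro) (fact grp fin act_one act_mult vs_height vs_inj vs_indep P_def P_inv)+
  show ?thesis
  proof (intro conjI allI ballI)
    fix i g assume "g \<in> carrier G"
    then show "fps_nth (phi A b P g) i = of_nat (card {w \<in> BOX CARD('d) vs. snd w = int i \<and> latact A b g w = w})"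
      by (rule E.phi_nth)
  next
    fix g assume "g \<in> carrier G"
    then show "Abs_fps (\<lambda>m. of_nat (card (latpts m (fixpart A b g P))) :: complex)
        = (\<Sum>w\<in>{w \<in> BOX CARD('d) vs. latact A b g w = w}. fps_X ^ nat (snd w))
          / ((1 - fps_X) * detIrho A g)"
      by (rule E.claim2)
  next
    fix i
    show "char_inner G (\<lambda>g. fps_nth (phi A b P g) i) (\<lambda>g. 1)
          = of_nat (card (act_orbits G (latact A b) {w \<in> BOX CARD('d) vs. snd w = int i}))"
      using E.claim3[of i] by (simp add: E.Xi_def)
  next
    fix i
    show "char_inner G (\<lambda>g. fps_nth (phi A b P g) i) (\<lambda>g. of_int (det (A g)))
          = of_nat (card {Orb \<in> act_orbits G (latact A b) {w \<in> BOX CARD('d) vs. snd w = int i}.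
                            \<forall>w\<in>Orb. act_stabilizer G (latact A b) w \<subseteq> {g \<in> carrier G. det (A g) = 1}})"
      using E.claim4[of i] by (simp add: E.Xi_def E.Kd_def)
  qed
qed


end
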